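(* Let $(p^1_n)_{n\in\mathbb Z},\dots,(p^d_n)_{n\in\mathbb Z}$ be scalar Lyapunov sequences satisfying $p^i_n=p^i_{-n}$ for all $n\in\mathbb Z$ and $i=1,\dots,d$. Let $(C_n)_{n\in\mathbb Z}$, $C_n=(c^{(n)}_{ij})_{1\le i,j\le d}$, be an arbitrary bounded sequence of upper-triangular matrices in $\mathbb R^{d\times d}$ with $c^{(n)}_{ii}=p^i_n$ for all $n\in\mathbb Z$, $i=1,\dots,d$. Then the dichotomy spectrum of the system $x_{n+1}=C_nx_n$ is \[ \Sigma_{\rm ED}(C)=\bigcup_{i=1}^d\Sigma_{\rm ED}(p^i), \] where $\Sigma_{\rm ED}(p^i)$ is the dichotomy spectrum of the scalar system $z_{n+1}=p^i_nz_n$, $n\in\mathbb Z$.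
   Context: A scalar Lyapunov sequence is a sequence $(p_n)_{n\in\mathbb Z}$ of nonzero reals with $\sup_n|p_n|<\infty$ and $\sup_n|p_n|^{-1}<\infty$. For a sequence $(M_n)_{n\in\mathbb Z}$ of invertible $p\times p$ real matrices with $(M_n)$ and $(M_n^{-1})$ bounded, the evolution operator of $x_{n+1}=M_nx_n$ is $\Phi_M(m,n)=M_{m-1}\cdots M_n$ for $m>n$, $\Phi_M(n,n)=\mathrm{id}$, $\Phi_M(m,n)=M_m^{-1}\cdots M_{n-1}^{-1}$ for $m<n$. The system has an exponential dichotomy (ED) on $\mathbb Z$ if there exist $K,\alpha>0$ and invariant projections $(P_n)_{n\in\mathbb Z}$ ($P_m\Phi_M(m,n)=\Phi_M(m,n)P_n$) with $\|\Phi_M(m,n)P_n\|\le Ke^{-\alpha(m-n)}$ for $m\ge n$ and $\|\Phi_M(m,n)(\mathrm{id}-P_n)\|\le Ke^{\alpha(m-n)}$ for $m\le n$. The dichotomy spectrum $\Sigma_{\rm ED}(M)$ is the set of $\gamma\in\mathbb R$ for which $x_{n+1}=e^{-\gamma}M_nx_n$ has no ED on $\mathbb Z$. *)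

theory Defs
  imports "HOL-Analysis.Analysis"
begin

definition lyapunov_seq :: "(int \<Rightarrow> real) \<Rightarrow> bool" where
  "lyapunov_seq p \<longleftrightarrow> (\<forall>n. p n \<noteq> 0) \<and> bdd_above (range (\<lambda>n. \<bar>p n\<bar>))
     \<and> bdd_above (range (\<lambda>n. 1 / \<bar>p n\<bar>))"

fun fwd_prod :: "(int \<Rightarrow> real^'d^'d) \<Rightarrow> int \<Rightarrow> nat \<Rightarrow> real^'d^'d" where
  "fwd_prod M n 0 = mat 1"
| "fwd_prod M n (Suc k) = M (n + int k) ** fwd_prod M n k"

fun bwd_prod :: "(int \<Rightarrow> real^'d^'d) \<Rightarrow> int \<Rightarrow> nat \<Rightarrow> real^'d^'d" where
  "bwd_prod M n 0 = mat 1"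
| "bwd_prod M n (Suc k) = matrix_inv (M (n - 1 - int k)) ** bwd_prod M n k"

definition evol :: "(int \<Rightarrow> real^'d^'d) \<Rightarrow> int \<Rightarrow> int \<Rightarrow> real^'d^'d" where
  "evol M m n = (if n \<le> m then fwd_prod M n (nat (m - n)) else bwd_prod M n (nat (n - m)))"

definition has_ED :: "(int \<Rightarrow> real^'d^'d) \<Rightarrow> bool" where
  "has_ED M \<longleftrightarrow> (\<exists>K \<alpha> (P :: int \<Rightarrow> real^'d^'d). K > 0 \<and> \<alpha> > 0
     \<and> (\<forall>n. P n ** P n = P n)
     \<and> (\<forall>m n. P m ** evol M m n = evol M m n ** P n)
     \<and> (\<forall>m n. n \<le> m \<longrightarrow> norm (evol M m n ** P n) \<le> K * exp (- \<alpha> * real_of_int (m - n)))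
     \<and> (\<forall>m n. m \<le> n \<longrightarrow> norm (evol M m n ** (mat 1 - P n)) \<le> K * exp (\<alpha> * real_of_int (m - n))))"

definition ED_spectrum :: "(int \<Rightarrow> real^'d^'d) \<Rightarrow> real set" where
  "ED_spectrum M = {\<gamma>. \<not> has_ED (\<lambda>n. exp (- \<gamma>) *\<^sub>R M n)}"

definition scalar_sys :: "(int \<Rightarrow> real) \<Rightarrow> int \<Rightarrow> real^1^1" where
  "scalar_sys p n = mat (p n)"

definition upper_triangular :: "(real, 'd::{finite,linorder}) vec^('d::{finite,linorder}) \<Rightarrow> bool" where
  "upper_triangular A \<longleftrightarrow> (\<forall>i j. j < i \<longrightarrow> A $ i $ j = 0)"

end

theory Submission
  imports Defs
begin
lemma finite_down_induct:
  fixes P :: "'a::{finite,linorder} \<Rightarrow> bool"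
  assumes step: "\<And>i. (\<And>j. i < j \<Longrightarrow> P j) \<Longrightarrow> P i"
  shows "P i"
proof -
  have "\<forall>i. card {j. i < j} \<le> n \<longrightarrow> P i" for n
  proof (induction n)
    case 0
    show ?case
    proof (intro allI impI)
      fix i :: 'a assume h: "card {j. i < j} \<le> 0"
      show "P i"
      proof (rule step)
        fix j assume "i < j"
        then have "{j. i < j} \<noteq> {}" by auto
        then have "card {j. i < j} > 0" by (simp add: card_gt_0_iff)
        with h show "P j" by simp
      qed
    qed
  next
    case (Suc n)
    show ?case
    proof (intro allI impI)
      fix i :: 'a assume h: "card {j. i < j} \<le> Suc n"
      show "P i"
      proof (rule step)
        fix j assume ij: "i < j"
        then have "{k. j < k} \<subset> {k. i < k}" by auto
        then have "card {k. j < k} < card {k. i < k}" by (simp add: psubset_card_mono)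
        then show "P j" using Suc.IH h by auto
      qed
    qed
  qed
  then show ?thesis by blast
qed

lemma matrix_inv_props:
  fixes A :: "real^'n^'n"
  assumes "invertible A"
  shows "A ** matrix_inv A = mat 1" "matrix_inv A ** A = mat 1"
  using someI_ex[OF assms[unfolded invertible_def]] unfolding matrix_inv_def by auto

lemma sum_single_nonzero:
  fixes f :: "'a::finite \<Rightarrow> real"
  assumes "\<And>k. k \<noteq> i \<Longrightarrow> f k = 0"
  shows "sum f UNIV = f i"
proof -
  have "sum f UNIV = f i + sum f (UNIV - {i})"
    by (rule sum.remove) auto
  also have "sum f (UNIV - {i}) = 0" using assms by (intro sum.neutral) auto
  finally show ?thesis by simp
qed

lemma ut_mult:
  fixes A B :: "real^'d::{finite,linorder}^'d::{finite,linorder}"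
  assumes "upper_triangular A" "upper_triangular B"
  shows "upper_triangular (A ** B)" "(A ** B)$i$i = A$i$i * B$i$i"
proof -
  show "upper_triangular (A ** B)"
    unfolding upper_triangular_def
  proof (intro allI impI)
    fix i j :: 'd assume ji: "j < i"
    have "(A ** B)$i$j = (\<Sum>k\<in>UNIV. A$i$k * B$k$j)" by (simp add: matrix_matrix_mult_def)
    also have "\<dots> = 0"
    proof (intro sum.neutral ballI)
      fix k :: 'd
      show "A$i$k * B$k$j = 0"
      proof (cases "k < i")
        case True then show ?thesis using assms(1) by (simp add: upper_triangular_def)
      next
        case False then have "j < k" using ji by auto
        then show ?thesis using assms(2) by (simp add: upper_triangular_def)
      qed
    qed
    finally show "(A ** B)$i$j = 0" .
  qed
  have "(A ** B)$i$i = (\<Sum>k\<in>UNIV. A$i$k * B$k$i)" by (simp add: matrix_matrix_mult_def)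
  also have "\<dots> = A$i$i * B$i$i"
  proof (rule sum_single_nonzero)
    fix k assume "k \<noteq> i"
    then consider "k < i" | "i < k" by fastforce
    then show "A$i$k * B$k$i = 0" using assms by cases (auto simp: upper_triangular_def)
  qed
  finally show "(A ** B)$i$i = A$i$i * B$i$i" .
qed

lemma ut_mulv_comp:
  fixes A :: "real^'d::{finite,linorder}^'d::{finite,linorder}"
  assumes "upper_triangular A" "\<And>j. i < j \<Longrightarrow> x$j = 0"
  shows "(A *v x)$i = A$i$i * x$i"
proof -
  have "(A *v x)$i = (\<Sum>k\<in>UNIV. A$i$k * x$k)" by (simp add: matrix_vector_mult_def)
  also have "\<dots> = A$i$i * x$i"
  proof (rule sum_single_nonzero)
    fix k assume "k \<noteq> i"
    then consider "k < i" | "i < k" by fastforce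
    then show "A$i$k * x$k = 0" using assms by cases (auto simp: upper_triangular_def)
  qed
  finally show ?thesis .
qed

lemma ut_mulv_sub:
  fixes A :: "real^'d::{finite,linorder}^'d::{finite,linorder}"
  assumes "upper_triangular A" "\<And>j. i < j \<Longrightarrow> x$j = 0" "i < j"
  shows "(A *v x)$j = 0"
proof -
  have "(A *v x)$j = (\<Sum>k\<in>UNIV. A$j$k * x$k)" by (simp add: matrix_vector_mult_def)
  also have "\<dots> = 0"
  proof (intro sum.neutral ballI)
    fix k :: 'd
    show "A$j$k * x$k = 0"
    proof (cases "k < j")
      case True then show ?thesis using assms(1) by (simp add: upper_triangular_def)
    next
      case False then have "i < k" using assms(3) by auto
      then show ?thesis using assms(2) by simp
    qed
  qed
  finally show ?thesis .
qed

lemma ut_invertible: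
  fixes A :: "real^'d::{finite,linorder}^'d::{finite,linorder}"
  assumes "upper_triangular A" "\<And>i. A$i$i \<noteq> 0"
  shows "invertible A"
proof -
  have "x = 0" if "A *v x = 0" for x
  proof -
    have "x$i = 0" for i
    proof (induction i rule: finite_down_induct)
      case (1 i)
      have "(A *v x)$i = A$i$i * x$i" using ut_mulv_comp[OF assms(1)] 1 by blast
      then show ?case using that assms(2)[of i] by simp
    qed
    then show ?thesis by (simp add: vec_eq_iff)
  qed
  then have "\<exists>B. B ** A = mat 1" using matrix_left_invertible_ker by blast
  then show ?thesis using invertible_left_inverse by blast
qed

lemma ut_inv:
  fixes A :: "real^'d::{finite,linorder}^'d::{finite,linorder}"
  assumes ut: "upper_triangular A" and nz: "\<And>i. A$i$i \<noteq> 0"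
  shows "upper_triangular (matrix_inv A)" "(matrix_inv A)$i$i = 1 / A$i$i"
proof -
  let ?X = "matrix_inv A"
  have inv: "A ** ?X = mat 1" using matrix_inv_props ut_invertible[OF ut nz] by blast
  have X0: "\<forall>j. j < i \<longrightarrow> ?X$i$j = 0" for i
  proof (induction i rule: finite_down_induct)
    case (1 i)
    show ?case
    proof (intro allI impI)
      fix j assume ji: "j < i"
      have "(A ** ?X)$i$j = (\<Sum>k\<in>UNIV. A$i$k * ?X$k$j)" by (simp add: matrix_matrix_mult_def)
      also have "\<dots> = A$i$i * ?X$i$j"
      proof (rule sum_single_nonzero)
        fix k assume "k \<noteq> i"
        then consider "k < i" | "i < k" by fastforce
        then show "A$i$k * ?X$k$j = 0"
        proof cases
          case 1 then show ?thesis using ut by (simp add: upper_triangular_def)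
        next
          case 2 then have "?X$k$j = 0" using "1.IH"[of k] ji by auto
          then show ?thesis by simp
        qed
      qed
      finally have "A$i$i * ?X$i$j = (A ** ?X)$i$j" by simp
      then show "?X$i$j = 0" using ji nz[of i] inv by (simp add: mat_def split: if_splits)
    qed
  qed
  then show utX: "upper_triangular ?X" by (simp add: upper_triangular_def)
  have "(A ** ?X)$i$i = A$i$i * ?X$i$i" using ut_mult[OF ut utX] by blast
  then have "A$i$i * ?X$i$i = 1" using inv by (simp add: mat_def)
  then show "?X$i$i = 1 / A$i$i" using nz[of i] by (simp add: field_simps)
qed

definition pr :: "(int \<Rightarrow> real) \<Rightarrow> int \<Rightarrow> int \<Rightarrow> real" where
  "pr q m n = prod q {n..<m}"

definition sev :: "(int \<Rightarrow> real) \<Rightarrow> int \<Rightarrow> int \<Rightarrow> real" where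
  "sev q m n = (if n \<le> m then pr q m n else 1 / pr q n m)"

lemma pr_same[simp]: "pr q n n = 1" by (simp add: pr_def)

lemma pr_step: "n \<le> m \<Longrightarrow> pr q (m+1) n = q m * pr q m n"
proof -
  assume "n \<le> m"
  then have "{n..<m+1} = insert m {n..<m}" by auto
  then show ?thesis by (simp add: pr_def)
qed

lemma pr_front: "n < m \<Longrightarrow> pr q m n = q n * pr q m (n+1)"
proof -
  assume "n < m"
  then have "{n..<m} = insert n {n+1..<m}" by auto
  then show ?thesis by (simp add: pr_def)
qed

lemma pr_split: "k \<le> n \<Longrightarrow> n \<le> m \<Longrightarrow> pr q m k = pr q m n * pr q n k"
proof -
  assume a: "k \<le> n" "n \<le> m"
  then have "{k..<m} = {n..<m} \<union> {k..<n}" by auto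
  moreover have "{n..<m} \<inter> {k..<n} = {}" by auto
  ultimately show ?thesis unfolding pr_def by (simp add: prod.union_disjoint)
qed

lemma pr_nz: "(\<And>l. q l \<noteq> 0) \<Longrightarrow> pr q m n \<noteq> 0"
  unfolding pr_def by (simp add: prod_zero_iff)

lemma pr_abs: "\<bar>pr q m n\<bar> = pr (\<lambda>l. \<bar>q l\<bar>) m n"
  unfolding pr_def by (simp add: abs_prod)

lemma sev_same[simp]: "sev q n n = 1" by (simp add: sev_def)

lemma sev_step:
  assumes nz: "\<And>l. q l \<noteq> 0"
  shows "sev q (m+1) n = q m * sev q m n"
proof (cases "n \<le> m")
  case True then show ?thesis by (simp add: sev_def pr_step)
next
  case False
  then have a: "pr q n m = q m * pr q n (m+1)" using pr_front by simp
  have "sev q (m+1) n = 1 / pr q n (m+1)"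
    using False by (cases "n = m + 1") (auto simp: sev_def)
  then show ?thesis using False a nz[of m] pr_nz[of q n "m+1", OF nz] by (simp add: sev_def)
qed

lemma sev_nz: "(\<And>l. q l \<noteq> 0) \<Longrightarrow> sev q m n \<noteq> 0"
  unfolding sev_def using pr_nz by auto

lemma evol_same[simp]: "evol M n n = mat 1"
  by (simp add: evol_def)

lemma evol_back:
  assumes "m < n"
  shows "evol M m n = matrix_inv (M m) ** evol M (m+1) n"
proof -
  have e1: "nat (n - m) = Suc (nat (n - m - 1))" using assms by simp
  have e2: "n - 1 - int (nat (n - m - 1)) = m" using assms by simp
  have "evol M m n = bwd_prod M n (Suc (nat (n - m - 1)))"
    using assms e1 by (simp add: evol_def)
  also have "\<dots> = matrix_inv (M (n - 1 - int (nat (n - m - 1)))) ** bwd_prod M n (nat (n - m - 1))"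
    by simp
  also have "\<dots> = matrix_inv (M m) ** bwd_prod M n (nat (n - m - 1))" using e2 by simp
  finally have "evol M m n = matrix_inv (M m) ** bwd_prod M n (nat (n - m - 1))" .
  moreover have "evol M (m+1) n = bwd_prod M n (nat (n - m - 1))"
  proof (cases "m + 1 = n")
    case True then show ?thesis by (simp add: evol_def)
  next
    case False then show ?thesis using assms by (simp add: evol_def algebra_simps)
  qed
  ultimately show ?thesis by simp
qed

context
  fixes M :: "int \<Rightarrow> real^'d::{finite,linorder}^'d::{finite,linorder}"
  assumes inv: "\<And>n. invertible (M n)"
begin

lemma evol_step: "evol M (m+1) n = M m ** evol M m n"
proof (cases "n \<le> m")
  case True
  have "nat (m + 1 - n) = Suc (nat (m - n))" using True by simp
  then show ?thesis using True by (simp add: evol_def)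
next
  case False
  then have "evol M m n = matrix_inv (M m) ** evol M (m+1) n" by (simp add: evol_back)
  then have "M m ** evol M m n = (M m ** matrix_inv (M m)) ** evol M (m+1) n"
    by (simp add: matrix_mul_assoc)
  then show ?thesis using matrix_inv_props[OF inv] by simp
qed

lemma evol_step_back: "evol M (m-1) n = matrix_inv (M (m-1)) ** evol M m n"
proof -
  have "evol M m n = M (m-1) ** evol M (m-1) n" using evol_step[of "m-1" n] by simp
  then have "matrix_inv (M (m-1)) ** evol M m n = (matrix_inv (M (m-1)) ** M (m-1)) ** evol M (m-1) n"
    by (simp add: matrix_mul_assoc)
  then show ?thesis using matrix_inv_props[OF inv] by simp
qed

lemma evol_unique:
  assumes rec: "\<And>m. f (m+1) = M m ** f m"
  shows "f m = evol M m n ** f n"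
proof (induction m rule: int_induct[where k = n])
  case base then show ?case by simp
next
  case (step1 i)
  have "f (i+1) = M i ** (evol M i n ** f n)" using rec step1 by simp
  also have "\<dots> = evol M (i+1) n ** f n" by (simp add: evol_step matrix_mul_assoc)
  finally show ?case .
next
  case (step2 i)
  have "f i = M (i-1) ** f (i-1)" using rec[of "i-1"] by simp
  then have "matrix_inv (M (i-1)) ** f i = (matrix_inv (M (i-1)) ** M (i-1)) ** f (i-1)"
    by (simp add: matrix_mul_assoc)
  then have "f (i-1) = matrix_inv (M (i-1)) ** f i" using matrix_inv_props[OF inv] by simp
  also have "\<dots> = (matrix_inv (M (i-1)) ** evol M i n) ** f n" using step2 by (simp add: matrix_mul_assoc)
  also have "\<dots> = evol M (i-1) n ** f n" by (simp add: evol_step_back)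
  finally show ?case .
qed

lemma evol_cocycle: "evol M m k ** evol M k n = evol M m n"
  using evol_unique[of "\<lambda>m. evol M m n" m k] by (simp add: evol_step)

lemma evol_inv: "evol M m n ** evol M n m = mat 1"
  using evol_cocycle[of m n m] by simp

lemma ut_evol:
  assumes ut: "\<And>n. upper_triangular (M n)" and nz: "\<And>n i. M n $i$i \<noteq> 0"
  shows "upper_triangular (evol M m n) \<and> (\<forall>i. (evol M m n)$i$i = sev (\<lambda>l. M l $i$i) m n)"
proof (induction m rule: int_induct[where k = n])
  case base then show ?case by (simp add: upper_triangular_def mat_def)
next
  case (step1 i)
  show ?case
    using ut_mult[OF ut step1(2)[THEN conjunct1]] step1(2) sev_step[of "\<lambda>l. M l $_$_", OF nz]
    by (simp add: evol_step)
next
  case (step2 i)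
  have u: "upper_triangular (matrix_inv (M (i-1)))" "\<And>j. matrix_inv (M (i-1))$j$j = 1 / M (i-1)$j$j"
    using ut_inv[OF ut nz] by auto
  have "sev (\<lambda>l. M l $j$j) i n = M (i-1) $j$j * sev (\<lambda>l. M l $j$j) (i-1) n" for j
    using sev_step[of "\<lambda>l. M l $j$j" "i-1" n] nz by simp
  then show ?case
    using ut_mult[OF u(1) step2(2)[THEN conjunct1]] step2(2) u(2) nz
    by (simp add: evol_step_back)
qed

end

definition decayZ :: "(int \<Rightarrow> real) \<Rightarrow> bool" where
  "decayZ q \<longleftrightarrow> (\<exists>K \<alpha>. K > 0 \<and> \<alpha> > 0 \<and> (\<forall>m n. n \<le> m \<longrightarrow> \<bar>pr q m n\<bar> \<le> K * exp (- \<alpha> * real_of_int (m - n))))"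

definition growZ :: "(int \<Rightarrow> real) \<Rightarrow> bool" where
  "growZ q \<longleftrightarrow> (\<exists>K \<alpha>. K > 0 \<and> \<alpha> > 0 \<and> (\<forall>m n. n \<le> m \<longrightarrow> \<bar>1 / pr q m n\<bar> \<le> K * exp (- \<alpha> * real_of_int (m - n))))"

lemma mat_mult_mat: "(mat a :: real^'n^'n) ** mat b = mat (a * b)"
proof -
  have "(mat a ** mat b :: real^'n^'n)$i$j = (mat (a*b) :: real^'n^'n)$i$j" for i j
  proof -
    have "(mat a ** mat b :: real^'n^'n)$i$j = (\<Sum>k\<in>UNIV. (mat a :: real^'n^'n)$i$k * (mat b :: real^'n^'n)$k$j)"
      by (simp add: matrix_matrix_mult_def)
    also have "\<dots> = (mat a :: real^'n^'n)$i$i * (mat b :: real^'n^'n)$i$j"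
      by (rule sum_single_nonzero) (simp add: mat_def)
    finally show ?thesis by (simp add: mat_def)
  qed
  then show ?thesis by (simp add: vec_eq_iff)
qed

lemma mat_invertible: "c \<noteq> 0 \<Longrightarrow> invertible (mat c :: real^'n^'n)"
  unfolding invertible_def by (rule exI[of _ "mat (1/c)"]) (simp add: mat_mult_mat)

lemma one_one_mat: "(x :: real^1^1) = mat (x$1$1)"
  by (simp add: vec_eq_iff mat_def num1_eq1)

lemma norm_one_one: "norm (x :: real^1^1) = \<bar>x$1$1\<bar>"
  by (simp add: norm_vector_1)

lemma mat_diag[simp]: "(mat a :: real^'n^'n)$i$i = a" by (simp add: mat_def)

lemma mat_inj: "(mat a :: real^'n^'n) = mat b \<Longrightarrow> a = b"
  by (metis mat_diag)

lemma evol_scalar: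
  assumes nz: "\<And>n. q n \<noteq> 0"
  shows "evol (\<lambda>n. mat (q n) :: real^1^1) m n = mat (sev q m n)"
proof -
  let ?M = "\<lambda>n. mat (q n) :: real^1^1"
  have inv: "\<And>n. invertible (?M n)" using mat_invertible nz by blast
  have "mat (sev q m n) = evol ?M m n ** mat (sev q n n)"
    by (rule evol_unique[OF inv]) (simp add: mat_mult_mat sev_step[OF nz])
  then show ?thesis by simp
qed

lemma scalar_ED_iff:
  assumes nz: "\<And>n. q n \<noteq> 0"
  shows "has_ED (\<lambda>n. mat (q n) :: real^1^1) \<longleftrightarrow> decayZ q \<or> growZ q"
proof
  let ?M = "\<lambda>n. mat (q n) :: real^1^1"
  assume "has_ED ?M"
  then obtain K \<alpha> P where K: "K > 0" and a: "\<alpha> > 0" and idem: "\<forall>n. P n ** P n = P n"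
    and com: "\<forall>m n. P m ** evol ?M m n = evol ?M m n ** P n"
    and st: "\<forall>m n. n \<le> m \<longrightarrow> norm (evol ?M m n ** P n) \<le> K * exp (- \<alpha> * real_of_int (m - n))"
    and un: "\<forall>m n. m \<le> n \<longrightarrow> norm (evol ?M m n ** (mat 1 - P n)) \<le> K * exp (\<alpha> * real_of_int (m - n))"
    unfolding has_ED_def by blast
  define c where "c n = P n $1$1" for n
  have Pc: "P n = mat (c n)" for n using one_one_mat c_def by metis
  have c01: "c n = 0 \<or> c n = 1" for n
  proof -
    have "mat (c n) ** mat (c n) = (mat (c n) :: real^1^1)" using idem[rule_format, of n] by (simp only: Pc)
    then have "mat (c n * c n) = (mat (c n) :: real^1^1)" by (simp add: mat_mult_mat)
    then have "c n * c n = c n" by (rule mat_inj)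
    then show ?thesis by (metis mult_cancel_right1 mult_zero_left)
  qed
  have cconst: "c m = c n" for m n
  proof -
    have "mat (c m) ** mat (sev q m n) = (mat (sev q m n) ** mat (c n) :: real^1^1)"
      using com[rule_format, of m n] by (simp only: Pc evol_scalar[of q, OF nz])
    then have "mat (c m * sev q m n) = (mat (sev q m n * c n) :: real^1^1)"
      by (simp add: mat_mult_mat)
    then have "c m * sev q m n = sev q m n * c n" by (rule mat_inj)
    then have "(c m - c n) * sev q m n = 0" by (simp add: algebra_simps)
    then show ?thesis using sev_nz[of q m n, OF nz] by simp
  qed
  show "decayZ q \<or> growZ q"
  proof (cases "c 0 = 1")
    case True
    then have "P n = mat 1" for n using Pc cconst by metis
    then have "\<forall>m n. n \<le> m \<longrightarrow> \<bar>pr q m n\<bar> \<le> K * exp (- \<alpha> * real_of_int (m - n))"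
      using st evol_scalar[of q, OF nz] by (simp add: norm_one_one sev_def)
    then show ?thesis unfolding decayZ_def using K a by blast
  next
    case False
    then have c0: "c 0 = 0" using c01 by blast
    then have "P n = mat 0" for n using Pc cconst by metis
    then have "\<forall>m n. m \<le> n \<longrightarrow> \<bar>sev q m n\<bar> \<le> K * exp (\<alpha> * real_of_int (m - n))"
      using un evol_scalar[of q, OF nz] by (simp add: norm_one_one)
    then have "\<forall>m n. n \<le> m \<longrightarrow> \<bar>1 / pr q m n\<bar> \<le> K * exp (- \<alpha> * real_of_int (m - n))"
    proof (intro allI impI)
      fix m n :: int assume h: "\<forall>m n. m \<le> n \<longrightarrow> \<bar>sev q m n\<bar> \<le> K * exp (\<alpha> * real_of_int (m - n))" and nm: "n \<le> m"
      have "\<bar>sev q n m\<bar> \<le> K * exp (\<alpha> * real_of_int (n - m))" using h nm by blast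
      moreover have "sev q n m = 1 / pr q m n" using nm by (cases "n = m") (auto simp: sev_def)
      ultimately show "\<bar>1 / pr q m n\<bar> \<le> K * exp (- \<alpha> * real_of_int (m - n))" by (simp add: algebra_simps)
    qed
    then show ?thesis unfolding growZ_def using K a by blast
  qed
next
  let ?M = "\<lambda>n. mat (q n) :: real^1^1"
  assume "decayZ q \<or> growZ q"
  then show "has_ED ?M"
  proof
    assume "decayZ q"
    then obtain K \<alpha> where K: "K > 0" and a: "\<alpha> > 0" and b: "\<forall>m n. n \<le> m \<longrightarrow> \<bar>pr q m n\<bar> \<le> K * exp (- \<alpha> * real_of_int (m - n))"
      unfolding decayZ_def by blast
    have "\<forall>m n. n \<le> m \<longrightarrow> norm (evol ?M m n ** mat 1) \<le> K * exp (- \<alpha> * real_of_int (m - n))"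
      using b by (simp add: evol_scalar[of q, OF nz] norm_one_one sev_def)
    then show ?thesis unfolding has_ED_def using K a
      by (intro exI[of _ K] exI[of _ \<alpha>] exI[of _ "\<lambda>n. mat 1"]) auto
  next
    assume "growZ q"
    then obtain K \<alpha> where K: "K > 0" and a: "\<alpha> > 0" and b: "\<forall>m n. n \<le> m \<longrightarrow> \<bar>1 / pr q m n\<bar> \<le> K * exp (- \<alpha> * real_of_int (m - n))"
      unfolding growZ_def by blast
    have "\<forall>m n. m \<le> n \<longrightarrow> norm (evol ?M m n ** (mat 1 - 0)) \<le> K * exp (\<alpha> * real_of_int (m - n))"
    proof (intro allI impI)
      fix m n :: int assume nm: "m \<le> n"
      have "\<bar>1 / pr q n m\<bar> \<le> K * exp (- \<alpha> * real_of_int (n - m))" using b nm by blast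
      moreover have "sev q m n = 1 / pr q n m" using nm by (cases "n = m") (auto simp: sev_def)
      ultimately show "norm (evol ?M m n ** (mat 1 - 0)) \<le> K * exp (\<alpha> * real_of_int (m - n))"
        using evol_scalar[of q, OF nz] by (simp add: norm_one_one algebra_simps)
    qed
    then show ?thesis unfolding has_ED_def using K a
      by (intro exI[of _ K] exI[of _ \<alpha>] exI[of _ "\<lambda>n. 0"]) auto
  qed
qed

lemma proj_adapted:
  fixes P0 :: "real^'n^'n" and V :: "(real^'n) set"
  assumes idem: "P0 ** P0 = P0" and sV: "subspace V"
  shows "\<exists>Q. P0 ** Q = Q \<and> Q ** P0 = P0 \<and> (\<forall>v\<in>V. Q *v v \<in> V)"
proof -
  define S where "S = {x. P0 *v x = x}"
  have sS: "subspace S" unfolding S_def subspace_def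
    by (auto simp: matrix_vector_right_distrib matrix_vector_mult_scaleR)
  define T where "T = S \<inter> V"
  have sT: "subspace T" unfolding T_def using sS sV by (simp add: subspace_inter)
  obtain B1 where B1: "B1 \<subseteq> T" "independent B1" "T \<subseteq> span B1" "card B1 = dim T"
    by (rule basis_exists[of T])
  have B1V: "B1 \<subseteq> V" using B1(1) T_def by blast
  obtain B2 where B2: "B1 \<subseteq> B2" "B2 \<subseteq> V" "independent B2" "V \<subseteq> span B2"
    by (rule maximal_independent_subset_extend[OF B1V B1(2)])
  have B2S: "B2 \<subseteq> B2 \<union> S" by blast
  obtain B where B: "B2 \<subseteq> B" "B \<subseteq> B2 \<union> S" "independent B" "B2 \<union> S \<subseteq> span B"
    by (rule maximal_independent_subset_extend[OF B2S B2(3)])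
  have BU: "B \<subseteq> UNIV" by blast
  obtain Bf where Bf: "B \<subseteq> Bf" "Bf \<subseteq> UNIV" "independent Bf" "UNIV \<subseteq> span Bf"
    by (rule maximal_independent_subset_extend[OF BU B(3)])
  define f where "f x = (if x \<in> B1 \<union> (B - B2) then x else 0)" for x :: "real^'n"
  obtain g where g: "linear g" "\<And>x. x \<in> Bf \<Longrightarrow> g x = f x"
    using linear_independent_extend[OF Bf(3), of f] by blast
  have gS: "g x \<in> S" for x
  proof -
    have "g ` Bf \<subseteq> S"
    proof
      fix y assume "y \<in> g ` Bf"
      then obtain b where b: "b \<in> Bf" "y = g b" by blast
      show "y \<in> S"
      proof (cases "b \<in> B1 \<union> (B - B2)")
        case True
        then have "b \<in> S" using B1 B T_def by blast
        then show ?thesis using b g(2) f_def True by simp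
      next
        case False then show ?thesis using b g(2) f_def subspace_0[OF sS] by auto
      qed
    qed
    then have "span (g ` Bf) \<subseteq> S" using span_minimal sS by blast
    moreover have "g x \<in> span (g ` Bf)"
      using linear_span_image[OF g(1), of Bf] Bf(4) by blast
    ultimately show ?thesis by blast
  qed
  have gid1: "g x = x" if "x \<in> span (B1 \<union> (B - B2))" for x
  proof -
    have "g x = id x"
    proof (rule linear_eq_on[OF g(1) linear_id that])
      fix b assume b: "b \<in> B1 \<union> (B - B2)"
      then have "b \<in> Bf" using B1 B2 B Bf by blast
      then show "g b = id b" using g(2) f_def b by simp
    qed
    then show ?thesis by simp
  qed
  have gidS: "g s = s" if s: "s \<in> S" for s
  proof -
    have eqB: "B2 \<union> (B - B2) = B" using B(1) by blast
    have "s \<in> span B" using B(4) s by blast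
    then have "s \<in> span (B2 \<union> (B - B2))" using eqB by simp
    then obtain b2 b3 where bb: "s = b2 + b3" "b2 \<in> span B2" "b3 \<in> span (B - B2)"
      unfolding span_Un by blast
    have "B - B2 \<subseteq> S" using B by blast
    then have b3S: "b3 \<in> S" using bb span_minimal[OF _ sS] by blast
    have b2V: "b2 \<in> V" using bb B2 span_minimal[OF _ sV] by blast
    have "b2 = s - b3" using bb by simp
    then have "b2 \<in> S" using s b3S subspace_diff[OF sS] by simp
    then have "b2 \<in> span B1" using b2V B1 T_def by blast
    then have "b2 \<in> span (B1 \<union> (B - B2))" using span_mono[of B1 "B1 \<union> (B - B2)"] by blast
    moreover have "b3 \<in> span (B1 \<union> (B - B2))" using bb span_mono[of "B - B2" "B1 \<union> (B - B2)"] by blast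
    ultimately have "g b2 = b2" "g b3 = b3" using gid1 by auto
    then show ?thesis using bb linear_add[OF g(1)] by simp
  qed
  have gV: "g v \<in> V" if v: "v \<in> V" for v
  proof -
    have "g ` B2 \<subseteq> V"
    proof
      fix y assume "y \<in> g ` B2"
      then obtain b where b: "b \<in> B2" "y = g b" by blast
      have bBf: "b \<in> Bf" using b B Bf by blast
      show "y \<in> V"
      proof (cases "b \<in> B1")
        case True then show ?thesis using b g(2)[OF bBf] f_def B2 by auto
      next
        case False then show ?thesis using b g(2)[OF bBf] f_def subspace_0[OF sV] by auto
      qed
    qed
    then have "span (g ` B2) \<subseteq> V" using span_minimal sV by blast
    moreover have "g v \<in> span (g ` B2)"
      using linear_span_image[OF g(1), of B2] B2(4) v by blast
    ultimately show ?thesis by blast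
  qed
  define Q where "Q = matrix g"
  have Qv: "Q *v x = g x" for x using matrix_vector_mul(2)[OF g(1)] Q_def by metis
  have 1: "P0 ** Q = Q" unfolding matrix_eq
    using gS Qv S_def by (simp add: matrix_vector_mul_assoc[symmetric])
  have 2: "Q ** P0 = P0" unfolding matrix_eq
  proof
    fix x
    have "P0 *v x \<in> S" unfolding S_def
      by (simp add: matrix_vector_mul_assoc idem)
    then show "(Q ** P0) *v x = P0 *v x" using gidS Qv by (simp add: matrix_vector_mul_assoc[symmetric])
  qed
  show ?thesis using 1 2 gV Qv by auto
qed

lemma norm_le_entries: "norm (A :: real^'n^'m) \<le> (\<Sum>i\<in>UNIV. \<Sum>j\<in>UNIV. \<bar>A$i$j\<bar>)"
proof -
  have "norm A \<le> (\<Sum>i\<in>UNIV. norm (A$i))" by (simp add: norm_vec_def L2_set_le_sum)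
  also have "\<dots> \<le> (\<Sum>i\<in>UNIV. \<Sum>j\<in>UNIV. \<bar>A$i$j\<bar>)"
    by (intro sum_mono norm_le_l1_cart)
  finally show ?thesis .
qed

lemma entry_le_norm: "\<bar>(A :: real^'n^'m)$i$j\<bar> \<le> norm A"
proof -
  have "norm (A$i) \<le> norm A" unfolding norm_vec_def by (rule member_le_L2_set) simp_all
  then show ?thesis using component_le_norm_cart[of "A$i" j] by linarith
qed

lemma norm_mv: "norm ((A :: real^'n^'n) *v x) \<le> real CARD('n) ^ 2 * norm A * norm x"
proof -
  have c: "\<bar>(A *v x)$i\<bar> \<le> real CARD('n) * (norm A * norm x)" for i
  proof -
    have "\<bar>(A *v x)$i\<bar> = \<bar>\<Sum>j\<in>UNIV. A$i$j * x$j\<bar>" by (simp add: matrix_vector_mult_def)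
    also have "\<dots> \<le> (\<Sum>j\<in>UNIV. \<bar>A$i$j\<bar> * \<bar>x$j\<bar>)" by (rule order_trans[OF sum_abs]) (simp add: abs_mult)
    also have "\<dots> \<le> (\<Sum>j\<in>(UNIV::'n set). norm A * norm x)"
      by (intro sum_mono mult_mono entry_le_norm component_le_norm_cart) auto
    finally show ?thesis by simp
  qed
  have "norm (A *v x) \<le> (\<Sum>i\<in>UNIV. \<bar>(A *v x)$i\<bar>)" by (rule norm_le_l1_cart)
  also have "\<dots> \<le> (\<Sum>i\<in>(UNIV::'n set). real CARD('n) * (norm A * norm x))" by (intro sum_mono c)
  finally show ?thesis by (simp add: power2_eq_square algebra_simps)
qed

lemma norm_mm: "norm ((A :: real^'n^'n) ** (B :: real^'n^'n)) \<le> real CARD('n) ^ 3 * norm A * norm B"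
proof -
  have c: "\<bar>(A ** B)$i$j\<bar> \<le> real CARD('n) * (norm A * norm B)" for i j
  proof -
    have "\<bar>(A ** B)$i$j\<bar> = \<bar>\<Sum>k\<in>UNIV. A$i$k * B$k$j\<bar>" by (simp add: matrix_matrix_mult_def)
    also have "\<dots> \<le> (\<Sum>k\<in>UNIV. \<bar>A$i$k\<bar> * \<bar>B$k$j\<bar>)" by (rule order_trans[OF sum_abs]) (simp add: abs_mult)
    also have "\<dots> \<le> (\<Sum>k\<in>(UNIV::'n set). norm A * norm B)"
      by (intro sum_mono mult_mono entry_le_norm) auto
    finally show ?thesis by simp
  qed
  have "norm (A ** B) \<le> (\<Sum>i\<in>UNIV. \<Sum>j\<in>UNIV. \<bar>(A ** B)$i$j\<bar>)" by (rule norm_le_entries)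
  also have "\<dots> \<le> (\<Sum>i\<in>(UNIV::'n set). \<Sum>j\<in>(UNIV::'n set). real CARD('n) * (norm A * norm B))"
    apply (rule sum_mono)
    apply (rule sum_mono)
    apply (rule c)
    done
  finally show ?thesis by (simp add: power3_eq_cube algebra_simps)
qed

lemma mm_diff_l: "(A::real^'n^'m) ** (B - C) = A ** B - A ** C"
  by (simp add: matrix_matrix_mult_def vec_eq_iff sum_subtractf algebra_simps)
lemma mm_diff_r: "((B::real^'n^'m) - C) ** A = B ** A - C ** A"
  by (simp add: matrix_matrix_mult_def vec_eq_iff sum_subtractf algebra_simps)
lemma mv_diff_l: "((B::real^'n^'m) - C) *v x = B *v x - C *v x"
  by (simp add: matrix_vector_mult_def vec_eq_iff sum_subtractf algebra_simps)

lemma Q_construct: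
  fixes \<Phi> :: "int \<Rightarrow> int \<Rightarrow> real^'n^'n" and P :: "int \<Rightarrow> real^'n^'n"
  assumes coc: "\<And>m k n. \<Phi> m k ** \<Phi> k n = \<Phi> m n" and same: "\<And>n. \<Phi> n n = mat 1"
   and idem: "\<And>n. P n ** P n = P n" and com: "\<And>m n. P m ** \<Phi> m n = \<Phi> m n ** P n"
   and st0: "\<And>n. 0 \<le> n \<Longrightarrow> norm (\<Phi> n 0 ** P 0) \<le> K"
   and un0: "\<And>n. 0 \<le> n \<Longrightarrow> norm (\<Phi> 0 n ** (mat 1 - P n)) \<le> K"
   and Pb: "\<And>n. norm (P n) \<le> K"
   and sV: "subspace V" and Vinv: "\<And>m n v. v \<in> V \<Longrightarrow> \<Phi> m n *v v \<in> V"
  shows "\<exists>Q KQ. (\<forall>n. P n ** Q n = Q n) \<and> (\<forall>n. Q n ** P n = P n) \<and> (\<forall>m n. Q m ** \<Phi> m n = \<Phi> m n ** Q n)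
     \<and> (\<forall>n v. v \<in> V \<longrightarrow> Q n *v v \<in> V) \<and> (\<forall>n. 0 \<le> n \<longrightarrow> norm (Q n) \<le> KQ)"
proof -
  obtain Q0 where Q0: "P 0 ** Q0 = Q0" "Q0 ** P 0 = P 0" "\<forall>v\<in>V. Q0 *v v \<in> V"
    using proj_adapted[OF idem[of 0] sV] by blast
  define Q where "Q n = \<Phi> n 0 ** (Q0 ** \<Phi> 0 n)" for n
  have comR: "P m ** (\<Phi> m n ** X) = \<Phi> m n ** (P n ** X)" for m n and X :: "real^'n^'n"
    by (simp add: matrix_mul_assoc com)
  have cocR: "\<Phi> m k ** (\<Phi> k n ** X) = \<Phi> m n ** X" for m k n and X :: "real^'n^'n"
    by (simp add: matrix_mul_assoc coc)
  have Prep: "P n = \<Phi> n 0 ** (P 0 ** \<Phi> 0 n)" for n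
  proof -
    have "P n = P n ** (\<Phi> n 0 ** \<Phi> 0 n)" by (simp add: coc same)
    also have "\<dots> = (P n ** \<Phi> n 0) ** \<Phi> 0 n" by (simp only: matrix_mul_assoc)
    also have "\<dots> = (\<Phi> n 0 ** P 0) ** \<Phi> 0 n" by (simp only: com)
    also have "\<dots> = \<Phi> n 0 ** (P 0 ** \<Phi> 0 n)" by (simp only: matrix_mul_assoc)
    finally show ?thesis .
  qed
  have 1: "P n ** Q n = Q n" for n
  proof -
    have "P n ** Q n = \<Phi> n 0 ** (P 0 ** (Q0 ** \<Phi> 0 n))" unfolding Q_def by (rule comR)
    also have "P 0 ** (Q0 ** \<Phi> 0 n) = Q0 ** \<Phi> 0 n" by (simp add: matrix_mul_assoc Q0(1))
    finally show ?thesis unfolding Q_def .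
  qed
  have 2: "Q n ** P n = P n" for n
  proof -
    have "Q n ** P n = \<Phi> n 0 ** (Q0 ** (\<Phi> 0 n ** P n))" unfolding Q_def by (simp add: matrix_mul_assoc)
    also have "\<Phi> 0 n ** P n = P 0 ** \<Phi> 0 n" by (simp add: com)
    also have "Q0 ** (P 0 ** \<Phi> 0 n) = P 0 ** \<Phi> 0 n" by (simp add: matrix_mul_assoc Q0(2))
    finally show ?thesis using Prep[of n] by simp
  qed
  have 3: "Q m ** \<Phi> m n = \<Phi> m n ** Q n" for m n
  proof -
    have "Q m ** \<Phi> m n = \<Phi> m 0 ** (Q0 ** (\<Phi> 0 m ** \<Phi> m n))" unfolding Q_def by (simp add: matrix_mul_assoc)
    also have "\<dots> = \<Phi> m 0 ** (Q0 ** \<Phi> 0 n)" by (simp add: coc)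
    also have "\<dots> = \<Phi> m n ** (\<Phi> n 0 ** (Q0 ** \<Phi> 0 n))" by (simp add: cocR)
    finally show ?thesis unfolding Q_def .
  qed
  have 4: "Q n *v v \<in> V" if "v \<in> V" for n v
  proof -
    have "Q n *v v = \<Phi> n 0 *v (Q0 *v (\<Phi> 0 n *v v))" unfolding Q_def by (simp add: matrix_vector_mul_assoc)
    then show ?thesis using Vinv Q0(3) that by simp
  qed
  define c where "c = real CARD('n) ^ 3"
  have c0: "c \<ge> 0" unfolding c_def by simp
  have 5: "norm (Q n) \<le> K + c * K * (c * norm (Q0 - P 0) * K)" if n0: "0 \<le> n" for n
  proof -
    have e1: "P 0 ** (Q0 - P 0) = Q0 - P 0" by (simp add: mm_diff_l Q0(1) idem)
    have e2: "(Q0 - P 0) ** (mat 1 - P 0) = Q0 - P 0"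
      by (simp add: mm_diff_l mm_diff_r Q0(2) idem)
    have e3: "\<Phi> 0 n ** (mat 1 - P n) = (mat 1 - P 0) ** \<Phi> 0 n"
      by (simp add: mm_diff_l mm_diff_r com)
    have "(\<Phi> n 0 ** P 0) ** ((Q0 - P 0) ** (\<Phi> 0 n ** (mat 1 - P n)))
        = \<Phi> n 0 ** ((P 0 ** (Q0 - P 0)) ** (mat 1 - P 0)) ** \<Phi> 0 n"
      by (simp add: e3 matrix_mul_assoc)
    also have "\<dots> = \<Phi> n 0 ** (Q0 - P 0) ** \<Phi> 0 n" by (simp add: e1 e2)
    also have "\<dots> = Q n - P n"
      by (simp add: Q_def Prep[of n] mm_diff_l mm_diff_r matrix_mul_assoc)
    finally have eq: "Q n - P n = (\<Phi> n 0 ** P 0) ** ((Q0 - P 0) ** (\<Phi> 0 n ** (mat 1 - P n)))" by simp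
    have "norm (Q n - P n) \<le> c * norm (\<Phi> n 0 ** P 0) * norm ((Q0 - P 0) ** (\<Phi> 0 n ** (mat 1 - P n)))"
      unfolding eq c_def by (rule norm_mm)
    also have "\<dots> \<le> c * K * norm ((Q0 - P 0) ** (\<Phi> 0 n ** (mat 1 - P n)))"
      using st0[OF n0] c0 by (intro mult_right_mono mult_left_mono) auto
    also have "\<dots> \<le> c * K * (c * norm (Q0 - P 0) * K)"
    proof -
      have k0: "0 \<le> K" using Pb[of 0] norm_ge_zero order_trans by blast
      have "norm ((Q0 - P 0) ** (\<Phi> 0 n ** (mat 1 - P n))) \<le> c * norm (Q0 - P 0) * norm (\<Phi> 0 n ** (mat 1 - P n))"
        unfolding c_def by (rule norm_mm)
      also have "\<dots> \<le> c * norm (Q0 - P 0) * K"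
        using un0[OF n0] c0 by (intro mult_left_mono) auto
      finally show ?thesis using c0 k0 by (intro mult_left_mono) auto
    qed
    finally have "norm (Q n - P n) \<le> c * K * (c * norm (Q0 - P 0) * K)" .
    moreover have "norm (Q n) \<le> norm (P n) + norm (Q n - P n)"
      using norm_triangle_ineq[of "P n" "Q n - P n"] by simp
    ultimately show ?thesis using Pb[of n] by linarith
  qed
  show ?thesis
    by (rule exI[of _ Q], rule exI[of _ "K + c * K * (c * norm (Q0 - P 0) * K)"]) (use 1 2 3 4 5 in blast)
qed

lemma ut_mulv_low:
  fixes M :: "real^'d::{finite,linorder}^'d::{finite,linorder}"
  assumes "upper_triangular M" "\<forall>l. i \<le> l \<longrightarrow> x$l = 0" "i \<le> j"
  shows "(M *v x)$j = 0"
proof -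
  have "(M *v x)$j = M$j$j * x$j" by (rule ut_mulv_comp[OF assms(1)]) (use assms in auto)
  then show ?thesis using assms by simp
qed

lemma half_line:
  fixes A :: "int \<Rightarrow> real^'d::{finite,linorder}^'d::{finite,linorder}" and q :: "'d \<Rightarrow> int \<Rightarrow> real"
  assumes ut: "\<And>n. upper_triangular (A n)" and diag: "\<And>n i. A n $i$i = q i n"
    and nz: "\<And>i n. q i n \<noteq> 0" and ed: "has_ED A"
  shows "(\<exists>C \<beta>. C > 0 \<and> \<beta> > 0 \<and> (\<forall>m n. 0 \<le> n \<longrightarrow> n \<le> m \<longrightarrow> \<bar>pr (q i) m n\<bar> \<le> C * exp (- \<beta> * real_of_int (m - n))))
       \<or> (\<exists>C \<beta>. C > 0 \<and> \<beta> > 0 \<and> (\<forall>m n. 0 \<le> n \<longrightarrow> n \<le> m \<longrightarrow> \<bar>1 / pr (q i) m n\<bar> \<le> C * exp (- \<beta> * real_of_int (m - n))))"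
proof -
  have nzA: "\<And>n i. A n $i$i \<noteq> 0" using diag nz by simp
  have inv: "\<And>n. invertible (A n)" using ut_invertible[OF ut nzA] .
  define \<Phi> where "\<Phi> = evol A"
  have ut\<Phi>: "upper_triangular (\<Phi> m n)" for m n using ut_evol[of A, OF inv ut nzA] unfolding \<Phi>_def by blast
  have d\<Phi>: "\<Phi> m n $j$j = sev (q j) m n" for m n j
    using ut_evol[of A, OF inv ut nzA, of m n] unfolding \<Phi>_def by (simp add: diag)
  have coc: "\<And>m k n. \<Phi> m k ** \<Phi> k n = \<Phi> m n" unfolding \<Phi>_def using evol_cocycle[of A, OF inv] .
  have same: "\<And>n. \<Phi> n n = mat 1" unfolding \<Phi>_def by simp
  obtain K \<alpha> P where K: "K > 0" and a: "\<alpha> > 0" and idem: "\<And>n. P n ** P n = P n"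
    and com: "\<And>m n. P m ** \<Phi> m n = \<Phi> m n ** P n"
    and st: "\<And>m n. n \<le> m \<Longrightarrow> norm (\<Phi> m n ** P n) \<le> K * exp (- \<alpha> * real_of_int (m - n))"
    and un: "\<And>m n. m \<le> n \<Longrightarrow> norm (\<Phi> m n ** (mat 1 - P n)) \<le> K * exp (\<alpha> * real_of_int (m - n))"
    using ed unfolding has_ED_def \<Phi>_def by blast
  have st0: "norm (\<Phi> n 0 ** P 0) \<le> K" if "0 \<le> n" for n
  proof -
    have "norm (\<Phi> n 0 ** P 0) \<le> K * exp (- \<alpha> * real_of_int (n - 0))" using st that by blast
    also have "\<dots> \<le> K * 1" using K a that by (intro mult_left_mono) auto
    finally show ?thesis by simp
  qed
  have un0: "norm (\<Phi> 0 n ** (mat 1 - P n)) \<le> K" if "0 \<le> n" for n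
  proof -
    have "norm (\<Phi> 0 n ** (mat 1 - P n)) \<le> K * exp (\<alpha> * real_of_int (0 - n))" using un that by blast
    also have "\<dots> \<le> K * 1" using K a that by (intro mult_left_mono) auto
    finally show ?thesis by simp
  qed
  have Pb: "norm (P n) \<le> K" for n using st[of n n] same by simp
  define c2 where "c2 = real CARD('d) ^ 2"
  have c2: "c2 \<ge> 0" unfolding c2_def by simp
  define c3 where "c3 = real CARD('d) ^ 3"
  have c3: "c3 \<ge> 0" unfolding c3_def by simp
  define e where "e = axis i (1::real)"
  have ne: "norm e = 1" unfolding e_def by simp
  define Vi where "Vi = {x. \<forall>l. i < l \<longrightarrow> x$l = (0::real)}"
  define W where "W = {x. \<forall>l. i \<le> l \<longrightarrow> x$l = (0::real)}"
  have sVi: "subspace Vi" unfolding Vi_def subspace_def by auto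
  have sW: "subspace W" unfolding W_def subspace_def by auto
  have ViInv: "\<Phi> m n *v v \<in> Vi" if v: "v \<in> Vi" for m n v
  proof -
    have "(\<Phi> m n *v v)$l = 0" if "i < l" for l
      by (rule ut_mulv_sub[OF ut\<Phi>, of i v l]) (use that v in \<open>auto simp: Vi_def\<close>)
    then show ?thesis unfolding Vi_def by auto
  qed
  have WInv: "\<Phi> m n *v v \<in> W" if v: "v \<in> W" for m n v
  proof -
    have "(\<Phi> m n *v v)$l = 0" if "i \<le> l" for l
      by (rule ut_mulv_low[OF ut\<Phi>, of i v l]) (use that v in \<open>auto simp: W_def\<close>)
    then show ?thesis unfolding W_def by auto
  qed
  have compi: "(\<Phi> m n *v v)$i = sev (q i) m n * v$i" if v: "v \<in> Vi" for m n v
  proof -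
    have "(\<Phi> m n *v v)$i = \<Phi> m n $i$i * v$i"
      by (rule ut_mulv_comp[OF ut\<Phi>]) (use v in \<open>auto simp: Vi_def\<close>)
    then show ?thesis using d\<Phi> by simp
  qed
  have eVi: "e \<in> Vi" unfolding Vi_def e_def by (simp add: axis_def)
  have ei: "e$i = 1" unfolding e_def by simp
  show ?thesis
  proof (cases "\<exists>s. P 0 *v s = s \<and> s \<in> Vi \<and> s$i \<noteq> 0")
    case True
    then obtain s where s: "P 0 *v s = s" "s \<in> Vi" "s$i \<noteq> 0" by blast
    obtain Q KQ where Q: "\<forall>n. P n ** Q n = Q n" "\<forall>n. Q n ** P n = P n" "\<forall>m n. Q m ** \<Phi> m n = \<Phi> m n ** Q n"
       "\<forall>n v. v \<in> W \<longrightarrow> Q n *v v \<in> W" "\<forall>n. 0 \<le> n \<longrightarrow> norm (Q n) \<le> KQ"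
      using Q_construct[where \<Phi>=\<Phi> and P=P and K=K and V=W, OF coc same idem com st0 un0 Pb sW WInv] by blast
    have xn: "Q n *v e \<in> Vi \<and> (Q n *v e)$i = 1 \<and> P n *v (Q n *v e) = Q n *v e" for n
    proof -
      define sn where "sn = \<Phi> n 0 *v s"
      have snP: "P n *v sn = sn"
      proof -
        have "P n *v sn = (P n ** \<Phi> n 0) *v s" unfolding sn_def by (simp add: matrix_vector_mul_assoc)
        also have "\<dots> = \<Phi> n 0 *v (P 0 *v s)" by (simp add: com matrix_vector_mul_assoc)
        finally show ?thesis using s(1) sn_def by simp
      qed
      have snV: "sn \<in> Vi" using ViInv s(2) sn_def by simp
      have sni: "sn$i \<noteq> 0" using compi[OF s(2), of n 0] sev_nz[of "q i" n 0] nz s(3) sn_def by simp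
      define w where "w = e - (1 / sn$i) *\<^sub>R sn"
      have wW: "w \<in> W" unfolding W_def
      proof (intro CollectI allI impI)
        fix l assume il: "i \<le> l"
        show "w$l = 0"
        proof (cases "l = i")
          case True then show ?thesis using sni ei unfolding w_def by simp
        next
          case False then have "i < l" using il by simp
          then show ?thesis using snV unfolding w_def e_def Vi_def by (simp add: axis_def)
        qed
      qed
      have Qsn: "Q n *v sn = sn"
      proof -
        have "Q n *v sn = (Q n ** P n) *v sn" using snP by (simp add: matrix_vector_mul_assoc[symmetric])
        then show ?thesis using Q(2) snP by simp
      qed
      have eq: "e = (1 / sn$i) *\<^sub>R sn + w" unfolding w_def by simp
      have Qe: "Q n *v e = (1 / sn$i) *\<^sub>R sn + Q n *v w"
        unfolding eq by (simp add: matrix_vector_right_distrib matrix_vector_mult_scaleR Qsn)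
      have QwW: "Q n *v w \<in> W" using Q(4) wW by blast
      then have "(Q n *v w)$i = 0" unfolding W_def by auto
      then have c1: "(Q n *v e)$i = 1" using sni Qe by simp
      have c2: "Q n *v e \<in> Vi" unfolding Vi_def
      proof (intro CollectI allI impI)
        fix l assume "i < l"
        then show "(Q n *v e)$l = 0" using QwW snV unfolding Qe W_def Vi_def by auto
      qed
      have "P n *v (Q n *v e) = Q n *v e"
        using Q(1) by (simp add: matrix_vector_mul_assoc)
      then show ?thesis using c1 c2 by simp
    qed
    have xb: "norm (Q n *v e) \<le> c2 * KQ" if "0 \<le> n" for n
    proof -
      have "norm (Q n *v e) \<le> c2 * norm (Q n) * norm e" unfolding c2_def by (rule norm_mv)
      also have "\<dots> \<le> c2 * KQ" using Q(5) that c2 ne by (simp add: mult_left_mono)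
      finally show ?thesis .
    qed
    have KQ0: "KQ \<ge> 0" using Q(5)[rule_format, of 0] norm_ge_zero[of "Q 0"] by linarith
    have "\<forall>m n. 0 \<le> n \<longrightarrow> n \<le> m \<longrightarrow> \<bar>pr (q i) m n\<bar> \<le> (c2 * K * (c2 * KQ) + 1) * exp (- \<alpha> * real_of_int (m - n))"
    proof (intro allI impI)
      fix m n :: int assume n0: "0 \<le> n" and nm: "n \<le> m"
      let ?x = "Q n *v e"
      have "(\<Phi> m n *v ?x)$i = sev (q i) m n" using compi[of ?x m n] xn[of n] by simp
      then have "\<bar>pr (q i) m n\<bar> = \<bar>(\<Phi> m n *v ?x)$i\<bar>" using nm by (simp add: sev_def)
      also have "\<dots> \<le> norm (\<Phi> m n *v ?x)" by (rule component_le_norm_cart)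
      also have "\<Phi> m n *v ?x = (\<Phi> m n ** P n) *v ?x"
        using xn[of n] by (simp add: matrix_vector_mul_assoc[symmetric])
      also have "norm \<dots> \<le> c2 * norm (\<Phi> m n ** P n) * norm ?x" unfolding c2_def by (rule norm_mv)
      also have "\<dots> \<le> c2 * (K * exp (- \<alpha> * real_of_int (m - n))) * (c2 * KQ)"
        using st[OF nm] xb[OF n0] c2 K by (intro mult_mono mult_left_mono) auto
      also have "\<dots> = (c2 * K * (c2 * KQ)) * exp (- \<alpha> * real_of_int (m - n))" by simp
      also have "\<dots> \<le> (c2 * K * (c2 * KQ) + 1) * exp (- \<alpha> * real_of_int (m - n))"
        by (intro mult_right_mono) auto
      finally show "\<bar>pr (q i) m n\<bar> \<le> (c2 * K * (c2 * KQ) + 1) * exp (- \<alpha> * real_of_int (m - n))" .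
    qed
    moreover have "c2 * K * (c2 * KQ) + 1 > 0" using c2 K KQ0 by (simp add: add_nonneg_pos)
    ultimately show ?thesis using a by blast
  next
    case False
    obtain Q KQ where Q: "\<forall>n. P n ** Q n = Q n" "\<forall>n. Q n ** P n = P n" "\<forall>m n. Q m ** \<Phi> m n = \<Phi> m n ** Q n"
       "\<forall>n v. v \<in> Vi \<longrightarrow> Q n *v v \<in> Vi" "\<forall>n. 0 \<le> n \<longrightarrow> norm (Q n) \<le> KQ"
      using Q_construct[where \<Phi>=\<Phi> and P=P and K=K and V=Vi, OF coc same idem com st0 un0 Pb sVi ViInv] by blast
    have KQ0: "KQ \<ge> 0" using Q(5)[rule_format, of 0] norm_ge_zero[of "Q 0"] by linarith
    have un_n: "(e - Q n *v e) \<in> Vi \<and> (e - Q n *v e)$i = 1" for n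
    proof -
      have QeV: "Q n *v e \<in> Vi" using Q(4) eVi by blast
      define y where "y = \<Phi> 0 n *v (Q n *v e)"
      have yV: "y \<in> Vi" using ViInv QeV y_def by simp
      have "P 0 *v y = ((P 0 ** \<Phi> 0 n) ** Q n) *v e" unfolding y_def by (simp add: matrix_vector_mul_assoc matrix_mul_assoc)
      also have "\<dots> = (\<Phi> 0 n ** (P n ** Q n)) *v e" by (simp add: com matrix_mul_assoc)
      also have "\<dots> = y" unfolding y_def using Q(1) by (simp add: matrix_vector_mul_assoc)
      finally have "P 0 *v y = y" .
      then have yi: "y$i = 0" using False yV by blast
      have "\<Phi> n 0 *v y = (\<Phi> n 0 ** \<Phi> 0 n) *v (Q n *v e)" unfolding y_def by (simp add: matrix_vector_mul_assoc matrix_mul_assoc)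
      then have "\<Phi> n 0 *v y = Q n *v e" by (simp add: coc same)
      then have "(Q n *v e)$i = 0" using compi[OF yV, of n 0] yi by simp
      moreover have "e - Q n *v e \<in> Vi" using eVi QeV subspace_diff[OF sVi] by blast
      ultimately show ?thesis using ei by simp
    qed
    define I where "I = (mat 1 :: ((real, 'd) vec, 'd) vec)"
    have "\<forall>m n. 0 \<le> n \<longrightarrow> n \<le> m \<longrightarrow> \<bar>1 / pr (q i) m n\<bar> \<le> (c2 * (c3 * (norm I + KQ) * K) + 1) * exp (- \<alpha> * real_of_int (m - n))"
    proof (intro allI impI)
      fix m' n' :: int assume n0: "0 \<le> n'" and nm: "n' \<le> m'"
      define m where "m = n'"
      define n where "n = m'"
      have m0: "0 \<le> m" and mn: "m \<le> n" using n0 nm m_def n_def by auto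
      let ?u = "e - Q n *v e"
      have "(\<Phi> m n *v ?u)$i = sev (q i) m n" using compi[of ?u m n] un_n[of n] by simp
      moreover have "sev (q i) m n = 1 / pr (q i) n m" using mn by (cases "m = n") (auto simp: sev_def)
      ultimately have "\<bar>1 / pr (q i) m' n'\<bar> = \<bar>(\<Phi> m n *v ?u)$i\<bar>" using m_def n_def by simp
      also have "\<dots> \<le> norm (\<Phi> m n *v ?u)" by (rule component_le_norm_cart)
      also have "\<Phi> m n *v ?u = ((I - Q m) ** (\<Phi> m n ** (I - P n))) *v e"
      proof -
        have e1: "I - Q n = (I - Q n) ** (I - P n)"
          unfolding I_def by (simp add: mm_diff_l mm_diff_r Q(2))
        have e2: "\<Phi> m n ** (I - Q n) = (I - Q m) ** \<Phi> m n"
          unfolding I_def by (simp add: mm_diff_l mm_diff_r Q(3))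
        have "?u = (I - Q n) *v e" unfolding I_def by (simp add: mv_diff_l)
        then have "\<Phi> m n *v ?u = (\<Phi> m n ** ((I - Q n) ** (I - P n))) *v e"
          using e1 by (simp add: matrix_vector_mul_assoc)
        also have "\<dots> = ((\<Phi> m n ** (I - Q n)) ** (I - P n)) *v e" by (simp add: matrix_mul_assoc)
        also have "\<dots> = ((I - Q m) ** (\<Phi> m n ** (I - P n))) *v e" using e2 by (simp add: matrix_mul_assoc)
        finally show ?thesis .
      qed
      also have "norm \<dots> \<le> c2 * norm ((I - Q m) ** (\<Phi> m n ** (I - P n))) * norm e"
        unfolding c2_def by (rule norm_mv)
      also have "\<dots> = c2 * norm ((I - Q m) ** (\<Phi> m n ** (I - P n)))" using ne by simp
      also have "\<dots> \<le> c2 * (c3 * norm (I - Q m) * norm (\<Phi> m n ** (I - P n)))"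
        using c2 unfolding c3_def by (intro mult_left_mono norm_mm) auto
      also have "\<dots> \<le> c2 * (c3 * (norm I + KQ) * (K * exp (\<alpha> * real_of_int (m - n))))"
      proof -
        have "norm (I - Q m) \<le> norm I + norm (Q m)" by (rule norm_triangle_ineq4)
        also have "\<dots> \<le> norm I + KQ" using Q(5) m0 by simp
        finally have "norm (I - Q m) \<le> norm I + KQ" .
        moreover have "norm (\<Phi> m n ** (I - P n)) \<le> K * exp (\<alpha> * real_of_int (m - n))"
          using un[OF mn] unfolding I_def .
        ultimately show ?thesis using c2 c3 KQ0 norm_ge_zero[of I] by (intro mult_left_mono mult_mono) auto
      qed
      also have "\<dots> = (c2 * (c3 * (norm I + KQ) * K)) * exp (- \<alpha> * real_of_int (m' - n'))"
        using m_def n_def by (simp add: algebra_simps)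
      also have "\<dots> \<le> (c2 * (c3 * (norm I + KQ) * K) + 1) * exp (- \<alpha> * real_of_int (m' - n'))"
        by (intro mult_right_mono) auto
      finally show "\<bar>1 / pr (q i) m' n'\<bar> \<le> (c2 * (c3 * (norm I + KQ) * K) + 1) * exp (- \<alpha> * real_of_int (m' - n'))" .
    qed
    moreover have "c2 * (c3 * (norm I + KQ) * K) + 1 > 0" using c2 c3 K KQ0
      by (intro add_nonneg_pos mult_nonneg_nonneg) auto
    ultimately show ?thesis using a by blast
  qed
qed

lemma pr_mirror:
  assumes sym: "\<And>l. q (- l) = q l"
  shows "pr q m n = pr q (1 - n) (1 - m)"
  unfolding pr_def
  by (rule prod.reindex_bij_witness[where i = "\<lambda>l. - l" and j = "\<lambda>l. - l"]) (auto simp: sym)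

lemma sym_extend:
  fixes f :: "real \<Rightarrow> real"
  assumes sym: "\<And>l. q (- l) = q l" and fm: "\<And>a b. f (a * b) = f a * f b"
    and K: "K > 0" and a: "\<alpha> > 0"
    and h: "\<forall>m n. 0 \<le> n \<longrightarrow> n \<le> m \<longrightarrow> \<bar>f (pr q m n)\<bar> \<le> K * exp (- \<alpha> * real_of_int (m - n))"
  shows "\<forall>m n. n \<le> m \<longrightarrow> \<bar>f (pr q m n)\<bar> \<le> (K + K * K) * exp (- \<alpha> * real_of_int (m - n))"
proof (intro allI impI)
  fix m n :: int assume nm: "n \<le> m"
  have ex: "0 \<le> exp (- \<alpha> * real_of_int (m - n))" by simp
  have neg: "\<bar>f (pr q m' n')\<bar> \<le> K * exp (- \<alpha> * real_of_int (m' - n'))" if "m' \<le> 0" "n' \<le> m'" for m' n'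
  proof -
    have "pr q m' n' = pr q (1 - n') (1 - m')" by (rule pr_mirror[of q, OF sym])
    moreover have "\<bar>f (pr q (1 - n') (1 - m'))\<bar> \<le> K * exp (- \<alpha> * real_of_int ((1 - n') - (1 - m')))"
      using h[rule_format, of "1 - m'" "1 - n'"] that by auto
    moreover have "real_of_int ((1 - n') - (1 - m')) = real_of_int (m' - n')" by simp
    ultimately show ?thesis by simp
  qed
  have "\<bar>f (pr q m n)\<bar> \<le> K * exp (- \<alpha> * real_of_int (m - n)) \<or>
        \<bar>f (pr q m n)\<bar> \<le> (K * K) * exp (- \<alpha> * real_of_int (m - n))"
  proof (cases "0 \<le> n")
    case True then show ?thesis using h nm by blast
  next
    case n0: False
    show ?thesis
    proof (cases "m \<le> 0")
      case True then show ?thesis using neg nm by blast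
    next
      case False
      have "pr q m n = pr q m 0 * pr q 0 n" using n0 False by (intro pr_split) auto
      then have "\<bar>f (pr q m n)\<bar> = \<bar>f (pr q m 0)\<bar> * \<bar>f (pr q 0 n)\<bar>" by (simp add: fm abs_mult)
      also have "\<dots> \<le> (K * exp (- \<alpha> * real_of_int (m - 0))) * (K * exp (- \<alpha> * real_of_int (0 - n)))"
        using h[rule_format, of 0 m] neg[of 0 n] False n0 by (intro mult_mono) auto
      also have "\<dots> = (K * K) * (exp (- \<alpha> * real_of_int (m - 0)) * exp (- \<alpha> * real_of_int (0 - n)))"
        by (simp add: algebra_simps)
      also have "exp (- \<alpha> * real_of_int (m - 0)) * exp (- \<alpha> * real_of_int (0 - n)) = exp (- \<alpha> * real_of_int (m - n))"
        by (simp add: exp_add[symmetric] algebra_simps)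
      finally show ?thesis by blast
    qed
  qed
  moreover have "K * exp (- \<alpha> * real_of_int (m - n)) \<le> (K + K * K) * exp (- \<alpha> * real_of_int (m - n))"
    using K ex by (intro mult_right_mono) auto
  moreover have "(K * K) * exp (- \<alpha> * real_of_int (m - n)) \<le> (K + K * K) * exp (- \<alpha> * real_of_int (m - n))"
    using K ex by (intro mult_right_mono) auto
  ultimately show "\<bar>f (pr q m n)\<bar> \<le> (K + K * K) * exp (- \<alpha> * real_of_int (m - n))" by linarith
qed

lemma half_to_Z:
  fixes A :: "int \<Rightarrow> real^'d::{finite,linorder}^'d::{finite,linorder}" and q :: "'d \<Rightarrow> int \<Rightarrow> real"
  assumes ut: "\<And>n. upper_triangular (A n)" and diag: "\<And>n i. A n $i$i = q i n"
    and nz: "\<And>i n. q i n \<noteq> 0" and sym: "\<And>i l. q i (- l) = q i l" and ed: "has_ED A"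
  shows "decayZ (q i) \<or> growZ (q i)"
proof -
  from half_line[OF ut diag nz ed, of i] show ?thesis
  proof
    assume "\<exists>C \<beta>. C > 0 \<and> \<beta> > 0 \<and> (\<forall>m n. 0 \<le> n \<longrightarrow> n \<le> m \<longrightarrow> \<bar>pr (q i) m n\<bar> \<le> C * exp (- \<beta> * real_of_int (m - n)))"
    then obtain C \<beta> where C: "C > 0" "\<beta> > 0" "\<forall>m n. 0 \<le> n \<longrightarrow> n \<le> m \<longrightarrow> \<bar>id (pr (q i) m n)\<bar> \<le> C * exp (- \<beta> * real_of_int (m - n))"
      by auto
    have "\<forall>m n. n \<le> m \<longrightarrow> \<bar>id (pr (q i) m n)\<bar> \<le> (C + C * C) * exp (- \<beta> * real_of_int (m - n))"
      by (rule sym_extend[of "q i", OF sym _ C]) simp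
    moreover have "C + C * C > 0" using C by (simp add: add_pos_pos)
    ultimately show ?thesis unfolding decayZ_def using C by auto
  next
    assume "\<exists>C \<beta>. C > 0 \<and> \<beta> > 0 \<and> (\<forall>m n. 0 \<le> n \<longrightarrow> n \<le> m \<longrightarrow> \<bar>1 / pr (q i) m n\<bar> \<le> C * exp (- \<beta> * real_of_int (m - n)))"
    then obtain C \<beta> where C: "C > 0" "\<beta> > 0" "\<forall>m n. 0 \<le> n \<longrightarrow> n \<le> m \<longrightarrow> \<bar>(\<lambda>x. 1 / x) (pr (q i) m n)\<bar> \<le> C * exp (- \<beta> * real_of_int (m - n))"
      by auto
    have "\<forall>m n. n \<le> m \<longrightarrow> \<bar>(\<lambda>x. 1 / x) (pr (q i) m n)\<bar> \<le> (C + C * C) * exp (- \<beta> * real_of_int (m - n))"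
      by (rule sym_extend[of "q i", OF sym _ C]) simp
    moreover have "C + C * C > 0" using C by (simp add: add_pos_pos)
    ultimately show ?thesis unfolding growZ_def using C by auto
  qed
qed

lemma exp_nat_pow: "exp (- \<alpha> * real i) = exp (- \<alpha>) ^ i"
  using exp_of_nat2_mult[of "- \<alpha>" i] by simp

lemma exp_nat_pow': "exp (- (\<alpha> * real i)) = exp (- \<alpha>) ^ i"
  using exp_nat_pow by simp

lemma scalar_bounded_sol:
  fixes r f :: "int \<Rightarrow> real"
  assumes nz: "\<And>n. r n \<noteq> 0" and dg: "decayZ r \<or> growZ r" and fb: "\<And>n. \<bar>f n\<bar> \<le> F"
  shows "\<exists>t B. (\<forall>n. t (n+1) = r n * t n + f n) \<and> (\<forall>n. \<bar>t n\<bar> \<le> B)"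
proof -
  have F0: "F \<ge> 0" using fb[of 0] by linarith
  from dg show ?thesis
  proof
    assume "decayZ r"
    then obtain K \<alpha> where K: "K > 0" and a: "\<alpha> > 0"
      and b: "\<And>m n. n \<le> m \<Longrightarrow> \<bar>pr r m n\<bar> \<le> K * exp (- \<alpha> * real_of_int (m - n))"
      unfolding decayZ_def by blast
    define g where "g i = K * F * exp (- \<alpha>) ^ i" for i :: nat
    have sg: "summable g" unfolding g_def using a by (intro summable_mult summable_geometric) simp
    define tm where "tm n i = pr r n (n - int i) * f (n - int i - 1)" for n :: int and i :: nat
    have tb: "\<bar>tm n i\<bar> \<le> g i" for n i
    proof -
      have "\<bar>pr r n (n - int i)\<bar> \<le> K * exp (- \<alpha> * real i)" using b[of "n - int i" n] by simp
      then have "\<bar>pr r n (n - int i)\<bar> \<le> K * exp (- \<alpha>) ^ i" by (simp add: exp_nat_pow exp_nat_pow')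
      then have "\<bar>tm n i\<bar> \<le> (K * exp (- \<alpha>) ^ i) * F"
        unfolding tm_def abs_mult using fb F0 by (intro mult_mono) auto
      then show ?thesis unfolding g_def by (simp add: algebra_simps)
    qed
    have st: "summable (tm n)" for n
      by (rule summable_comparison_test[OF _ sg]) (use tb in auto)
    define t where "t n = suminf (tm n)" for n
    have rec: "t (n+1) = r n * t n + f n" for n
    proof -
      have "(\<Sum>i. tm (n+1) (Suc i)) = suminf (tm (n+1)) - tm (n+1) 0" by (rule suminf_split_head[OF st])
      moreover have "tm (n+1) 0 = f n" unfolding tm_def by simp
      moreover have "tm (n+1) (Suc i) = r n * tm n i" for i
      proof -
        have "pr r (n + 1) (n + 1 - int (Suc i)) = r n * pr r n (n - int i)"
          using pr_step[of "n - int i" n r] by simp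
        then show ?thesis unfolding tm_def by (simp add: algebra_simps)
      qed
      ultimately have "suminf (tm (n+1)) = f n + (\<Sum>i. r n * tm n i)" by simp
      also have "(\<Sum>i. r n * tm n i) = r n * t n" unfolding t_def by (rule suminf_mult[OF st])
      finally show ?thesis unfolding t_def by simp
    qed
    have bd: "\<bar>t n\<bar> \<le> suminf g" for n
      unfolding t_def using norm_suminf_le[of "tm n" g] tb sg by simp
    show ?thesis using rec bd by blast
  next
    assume "growZ r"
    then obtain K \<alpha> where K: "K > 0" and a: "\<alpha> > 0"
      and b: "\<And>m n. n \<le> m \<Longrightarrow> \<bar>1 / pr r m n\<bar> \<le> K * exp (- \<alpha> * real_of_int (m - n))"
      unfolding growZ_def by blast
    define g where "g i = K * F * exp (- \<alpha>) ^ i" for i :: nat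
    have sg: "summable g" unfolding g_def using a by (intro summable_mult summable_geometric) simp
    define tm where "tm n i = f (n + int i) / pr r (n + int i + 1) n" for n :: int and i :: nat
    have tb: "\<bar>tm n i\<bar> \<le> g i" for n i
    proof -
      have "\<bar>1 / pr r (n + int i + 1) n\<bar> \<le> K * exp (- \<alpha> * real_of_int (int i + 1))"
        using b[of n "n + int i + 1"] by simp
      also have "\<dots> \<le> K * exp (- \<alpha> * real i)" using K a by (intro mult_left_mono) auto
      finally have "\<bar>1 / pr r (n + int i + 1) n\<bar> \<le> K * exp (- \<alpha>) ^ i" by (simp add: exp_nat_pow exp_nat_pow')
      then have "\<bar>tm n i\<bar> \<le> F * (K * exp (- \<alpha>) ^ i)"
        unfolding tm_def divide_inverse abs_mult using fb F0
        by (intro mult_mono) (auto simp: abs_inverse)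
      then show ?thesis unfolding g_def by (simp add: algebra_simps)
    qed
    have st: "summable (tm n)" for n
      by (rule summable_comparison_test[OF _ sg]) (use tb in auto)
    define t where "t n = - suminf (tm n)" for n
    have rec: "t (n+1) = r n * t n + f n" for n
    proof -
      have "(\<Sum>i. tm n (Suc i)) = suminf (tm n) - tm n 0" by (rule suminf_split_head[OF st])
      moreover have "tm n 0 = f n / r n" unfolding tm_def using pr_step[of n n r] by simp
      moreover have "tm n (Suc i) = tm (n+1) i / r n" for i
      proof -
        have "pr r (n + int (Suc i) + 1) n = pr r (n + int (Suc i) + 1) (n+1) * pr r (n+1) n"
          by (rule pr_split) auto
        moreover have "pr r (n+1) n = r n" using pr_step[of n n r] by simp
        ultimately have "pr r (n + int (Suc i) + 1) n = pr r (n + 1 + int i + 1) (n+1) * r n"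
          by (simp add: algebra_simps)
        then show ?thesis unfolding tm_def by (simp add: algebra_simps)
      qed
      ultimately have "suminf (tm n) = f n / r n + (\<Sum>i. tm (n+1) i / r n)" by simp
      also have "(\<Sum>i. tm (n+1) i / r n) = suminf (tm (n+1)) / r n" by (rule suminf_divide[OF st])
      finally have "r n * suminf (tm n) = f n + suminf (tm (n+1))" using nz[of n] by (simp add: field_simps)
      then show ?thesis unfolding t_def by (simp add: algebra_simps)
    qed
    have bd: "\<bar>t n\<bar> \<le> suminf g" for n
      unfolding t_def using norm_suminf_le[of "tm n" g] tb sg by simp
    show ?thesis using rec bd by blast
  qed
qed

lemma ED_transfer:
  fixes A A' T Ti :: "int \<Rightarrow> real^'n::{finite,linorder}^'n::{finite,linorder}"
  assumes invA: "\<And>n. invertible (A n)" and invA': "\<And>n. invertible (A' n)"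
    and TTi: "\<And>n. T n ** Ti n = mat 1" and TiT: "\<And>n. Ti n ** T n = mat 1"
    and rel: "\<And>n. A n ** T n = T (n+1) ** A' n"
    and Tb: "\<And>n. norm (T n) \<le> B" and Tib: "\<And>n. norm (Ti n) \<le> B"
    and ed: "has_ED A'"
  shows "has_ED A"
proof -
  have ev: "evol A m n = T m ** evol A' m n ** Ti n" for m n
  proof -
    have "T m ** evol A' m n = evol A m n ** (T n ** evol A' n n)"
    proof (rule evol_unique[OF invA, where f = "\<lambda>m. T m ** evol A' m n"])
      fix k
      have "T (k+1) ** evol A' (k+1) n = (T (k+1) ** A' k) ** evol A' k n"
        by (simp add: evol_step[OF invA'] matrix_mul_assoc)
      also have "\<dots> = A k ** (T k ** evol A' k n)" by (simp add: rel[symmetric] matrix_mul_assoc)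
      finally show "T (k+1) ** evol A' (k+1) n = A k ** (T k ** evol A' k n)" .
    qed
    then have "T m ** evol A' m n ** Ti n = evol A m n ** (T n ** Ti n)" by (simp add: matrix_mul_assoc)
    then show ?thesis by (simp add: TTi)
  qed
  from ed obtain K \<alpha> P where K: "K > 0" and a: "\<alpha> > 0" and idem: "\<And>n. P n ** P n = P n"
    and com: "\<And>m n. P m ** evol A' m n = evol A' m n ** P n"
    and st: "\<And>m n. n \<le> m \<Longrightarrow> norm (evol A' m n ** P n) \<le> K * exp (- \<alpha> * real_of_int (m - n))"
    and un: "\<And>m n. m \<le> n \<Longrightarrow> norm (evol A' m n ** (mat 1 - P n)) \<le> K * exp (\<alpha> * real_of_int (m - n))"
    unfolding has_ED_def by blast
  define c where "c = real CARD('n) ^ 3"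
  have c0: "c \<ge> 0" unfolding c_def by simp
  have B0: "B \<ge> 0" using Tb[of 0] norm_ge_zero[of "T 0"] by linarith
  define P2 where "P2 n = T n ** P n ** Ti n" for n
  have cancel: "X ** Ti k ** T k ** Y = X ** Y" for X Y :: "((real,'n) vec,'n) vec" and k
    by (simp add: matrix_mul_assoc[symmetric] TiT)
  have idemR: "P n ** (P n ** X) = P n ** X" for n and X :: "((real,'n) vec,'n) vec"
    by (simp add: matrix_mul_assoc idem)
  have idem2: "P2 n ** P2 n = P2 n" for n
  proof -
    have "P2 n ** P2 n = T n ** P n ** Ti n ** T n ** (P n ** Ti n)"
      unfolding P2_def by (simp add: matrix_mul_assoc)
    also have "\<dots> = T n ** P n ** (P n ** Ti n)" by (rule cancel)
    also have "\<dots> = P2 n" unfolding P2_def by (simp add: matrix_mul_assoc[symmetric] idemR)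
    finally show ?thesis .
  qed
  have com2: "P2 m ** evol A m n = evol A m n ** P2 n" for m n
  proof -
    have "P2 m ** evol A m n = T m ** P m ** Ti m ** T m ** (evol A' m n ** Ti n)"
      unfolding P2_def ev by (simp add: matrix_mul_assoc)
    also have "\<dots> = T m ** P m ** (evol A' m n ** Ti n)" by (rule cancel)
    also have "\<dots> = T m ** (P m ** evol A' m n) ** Ti n" by (simp add: matrix_mul_assoc)
    also have "\<dots> = T m ** (evol A' m n ** P n) ** Ti n" by (simp add: com)
    also have "\<dots> = T m ** evol A' m n ** Ti n ** T n ** (P n ** Ti n)"
      by (simp add: cancel) (simp add: matrix_mul_assoc)
    also have "\<dots> = evol A m n ** P2 n" unfolding P2_def ev by (simp add: matrix_mul_assoc)
    finally show ?thesis .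
  qed
  have bnd: "norm (T m ** X ** Ti n) \<le> c * B * (c * norm X * B)" for m n and X :: "((real,'n) vec,'n) vec"
  proof -
    have "norm (T m ** X ** Ti n) = norm (T m ** (X ** Ti n))" by (simp add: matrix_mul_assoc)
    also have "\<dots> \<le> c * norm (T m) * norm (X ** Ti n)" unfolding c_def by (rule norm_mm)
    also have "\<dots> \<le> c * B * (c * norm X * B)"
    proof (intro mult_mono mult_left_mono)
      show "norm (X ** Ti n) \<le> c * norm X * B"
      proof -
        have "norm (X ** Ti n) \<le> c * norm X * norm (Ti n)" unfolding c_def by (rule norm_mm)
        also have "\<dots> \<le> c * norm X * B" using Tib c0 by (intro mult_left_mono) auto
        finally show ?thesis .
      qed
    qed (use Tb c0 B0 in auto)
    finally show ?thesis .
  qed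
  have st2: "norm (evol A m n ** P2 n) \<le> (c * B * (c * K * B) + K) * exp (- \<alpha> * real_of_int (m - n))"
    if "n \<le> m" for m n
  proof -
    have "evol A m n ** P2 n = T m ** (evol A' m n ** P n) ** Ti n"
      unfolding ev P2_def by (simp add: cancel matrix_mul_assoc)
    then have "norm (evol A m n ** P2 n) \<le> c * B * (c * norm (evol A' m n ** P n) * B)" using bnd by simp
    also have "\<dots> \<le> c * B * (c * (K * exp (- \<alpha> * real_of_int (m - n))) * B)"
      using st[OF that] c0 B0 by (intro mult_left_mono mult_right_mono) auto
    also have "\<dots> \<le> (c * B * (c * K * B) + K) * exp (- \<alpha> * real_of_int (m - n))"
      using K by (simp add: algebra_simps)
    finally show ?thesis .
  qed
  have un2: "norm (evol A m n ** (mat 1 - P2 n)) \<le> (c * B * (c * K * B) + K) * exp (\<alpha> * real_of_int (m - n))"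
    if "m \<le> n" for m n
  proof -
    have "mat 1 - P2 n = T n ** (mat 1 - P n) ** Ti n"
      unfolding P2_def by (simp add: mm_diff_l mm_diff_r TTi)
    then have "evol A m n ** (mat 1 - P2 n) = T m ** (evol A' m n ** (mat 1 - P n)) ** Ti n"
      unfolding ev by (simp add: cancel matrix_mul_assoc)
    then have "norm (evol A m n ** (mat 1 - P2 n)) \<le> c * B * (c * norm (evol A' m n ** (mat 1 - P n)) * B)"
      using bnd by simp
    also have "\<dots> \<le> c * B * (c * (K * exp (\<alpha> * real_of_int (m - n))) * B)"
      using un[OF that] c0 B0 by (intro mult_left_mono mult_right_mono) auto
    also have "\<dots> \<le> (c * B * (c * K * B) + K) * exp (\<alpha> * real_of_int (m - n))"
      using K by (simp add: algebra_simps)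
    finally show ?thesis .
  qed
  have pos: "c * B * (c * K * B) + K > 0" using c0 B0 K by (intro add_nonneg_pos) auto
  show ?thesis unfolding has_ED_def
    using pos a idem2 com2 st2 un2 by blast
qed

lemma voc:
  fixes y a g :: "nat \<Rightarrow> real"
  assumes rec: "\<And>k. y (Suc k) = a k * y k + g k"
  shows "y k = prod a {0..<k} * y 0 + (\<Sum>s<k. prod a {Suc s..<k} * g s)"
proof (induction k)
  case 0 then show ?case by simp
next
  case (Suc k)
  have p1: "prod a {0..<Suc k} = a k * prod a {0..<k}" by (simp add: prod.atLeastLessThan_Suc)
  have p2: "prod a {Suc s..<Suc k} = a k * prod a {Suc s..<k}" if "s < k" for s
    using that by (simp add: prod.atLeastLessThan_Suc)
  have "(\<Sum>s<Suc k. prod a {Suc s..<Suc k} * g s) = (\<Sum>s<k. prod a {Suc s..<Suc k} * g s) + g k"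
    by simp
  also have "(\<Sum>s<k. prod a {Suc s..<Suc k} * g s) = a k * (\<Sum>s<k. prod a {Suc s..<k} * g s)"
    by (simp add: sum_distrib_left p2 algebra_simps)
  finally have "(\<Sum>s<Suc k. prod a {Suc s..<Suc k} * g s) = a k * (\<Sum>s<k. prod a {Suc s..<k} * g s) + g k" .
  then show ?case using rec[of k] Suc p1 by (simp add: algebra_simps)
qed

lemma geo_bound:
  fixes x :: real
  assumes x: "0 < x" "x < 1"
  shows "(\<Sum>s<k. x ^ (2 * (k - Suc s)) * x ^ s) \<le> x ^ k / (x * (1 - x))"
proof -
  have t: "x ^ (2 * (k - Suc s)) * x ^ s = x ^ k * x ^ (k - Suc s) / x" if "s < k" for s
  proof -
    have "2 * (k - Suc s) + s + 1 = k + (k - Suc s)" using that by simp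
    then have "x ^ (2 * (k - Suc s)) * x ^ s * x = x ^ k * x ^ (k - Suc s)"
      by (metis power_add power_one_right)
    then show ?thesis using x by (simp add: field_simps)
  qed
  have "(\<Sum>s<k. x ^ (2 * (k - Suc s)) * x ^ s) = (\<Sum>s<k. x ^ k * x ^ (k - Suc s) / x)"
    by (rule sum.cong) (auto simp: t)
  also have "\<dots> = x ^ k / x * (\<Sum>s<k. x ^ (k - Suc s))" by (simp add: sum_distrib_left)
  also have "(\<Sum>s<k. x ^ (k - Suc s)) = (\<Sum>u<k. x ^ u)" by (rule sum.nat_diff_reindex)
  finally have eq: "(\<Sum>s<k. x ^ (2 * (k - Suc s)) * x ^ s) = x ^ k / x * (\<Sum>u<k. x ^ u)" .
  have "(\<Sum>u<k. x ^ u) = (1 - x ^ k) / (1 - x)" using x by (simp add: sum_gp_strict)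
  also have "\<dots> \<le> 1 / (1 - x)" using x by (intro divide_right_mono) auto
  finally have g: "(\<Sum>u<k. x ^ u) \<le> 1 / (1 - x)" .
  have "x ^ k / x * (\<Sum>u<k. x ^ u) \<le> x ^ k / x * (1 / (1 - x))"
    using x g by (intro mult_left_mono) auto
  then show ?thesis using eq by simp
qed

lemma coord_stab:
  fixes z :: "nat \<Rightarrow> real^'d::{finite,linorder}" and r :: "'d \<Rightarrow> nat \<Rightarrow> real" and I :: "'d set"
  assumes K: "K > 0" and x: "0 < x" "x < 1" and C: "C \<ge> 0"
   and rb: "\<And>i a b. i \<in> I \<Longrightarrow> a \<le> b \<Longrightarrow> \<bar>prod (r i) {a..<b}\<bar> \<le> K * x ^ (2 * (b - a))"
   and zout: "\<And>i k. i \<notin> I \<Longrightarrow> z k $ i = 0"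
   and rec: "\<And>i k. i \<in> I \<Longrightarrow> \<bar>z (Suc k) $ i - r i k * z k $ i\<bar> \<le> C * (\<Sum>l\<in>{l. i < l}. \<bar>z k $ l\<bar> + \<bar>z (Suc k) $ l\<bar>)"
  shows "\<bar>z k $ i\<bar> \<le> (K + 1) * (1 + 2 * K * C * real CARD('d) / (x * (1 - x))) ^ CARD('d) * x ^ k * norm (z 0)"
proof -
  define N where "N = real CARD('d)"
  define D where "D = 2 * K * C * N / (x * (1 - x))"
  define Z where "Z = norm (z 0)"
  define Mh where "Mh h = (K + 1) * (1 + D) ^ h" for h :: nat
  have x1: "x * (1 - x) > 0" using x by simp
  have N0: "N \<ge> 0" unfolding N_def by simp
  have D0: "D \<ge> 0" unfolding D_def using K C x1 N0 by simp
  have Z0: "Z \<ge> 0" unfolding Z_def by simp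
  have Mmono: "Mh h \<le> Mh h'" if "h \<le> h'" for h h'
    unfolding Mh_def using K D0 that by (intro mult_left_mono power_increasing) auto
  have Mpos: "Mh h \<ge> 0" for h unfolding Mh_def using K D0 by simp
  have xk: "x ^ k \<ge> 0" for k using x by simp
  have main: "\<forall>k. \<bar>z k $ i\<bar> \<le> Mh (card {l. i \<le> l}) * x ^ k * Z" for i
  proof (induction i rule: finite_down_induct)
    case (1 i)
    show ?case
    proof (cases "i \<in> I")
      case False then show ?thesis using zout Mpos xk Z0 by simp
    next
      case iI: True
      define h where "h = card {l. i \<le> l}"
      define M' where "M' = Mh (h - 1)"
      have M'0: "M' \<ge> 0" unfolding M'_def by (rule Mpos)
      have bl: "\<bar>z k $ l\<bar> \<le> M' * x ^ k * Z" if il: "i < l" for k l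
      proof -
        have sub: "{l'. l \<le> l'} \<subseteq> {l'. i \<le> l'}" using il by auto
        have ne: "{l'. l \<le> l'} \<noteq> {l'. i \<le> l'}"
        proof
          assume "{l'. l \<le> l'} = {l'. i \<le> l'}"
          then have "i \<in> {l'. l \<le> l'}" by simp
          with il show False by simp
        qed
        from sub ne have "{l'. l \<le> l'} \<subset> {l'. i \<le> l'}" by blast
        then have "card {l'. l \<le> l'} < h" unfolding h_def by (simp add: psubset_card_mono)
        then have "Mh (card {l'. l \<le> l'}) \<le> M'" unfolding M'_def by (intro Mmono) auto
        then have "Mh (card {l'. l \<le> l'}) * x ^ k * Z \<le> M' * x ^ k * Z"
          using xk Z0 by (intro mult_right_mono) auto
        moreover have "\<bar>z k $ l\<bar> \<le> Mh (card {l'. l \<le> l'}) * x ^ k * Z" using "1.IH"[OF il] by blast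
        ultimately show ?thesis by linarith
      qed
      define g where "g s = z (Suc s) $ i - r i s * z s $ i" for s
      have gb: "\<bar>g s\<bar> \<le> C * (N * (2 * M' * x ^ s * Z))" for s
      proof -
        have "\<bar>g s\<bar> \<le> C * (\<Sum>l\<in>{l. i < l}. \<bar>z s $ l\<bar> + \<bar>z (Suc s) $ l\<bar>)" using rec iI g_def by simp
        also have "(\<Sum>l\<in>{l. i < l}. \<bar>z s $ l\<bar> + \<bar>z (Suc s) $ l\<bar>) \<le> (\<Sum>l\<in>{l. i < l}. 2 * M' * x ^ s * Z)"
        proof (rule sum_mono)
          fix l assume "l \<in> {l. i < l}"
          then have il: "i < l" by simp
          have "x ^ Suc s \<le> x ^ s" using x by (simp add: power_decreasing)
          then have "M' * x ^ Suc s * Z \<le> M' * x ^ s * Z" using M'0 Z0 by (intro mult_right_mono mult_left_mono) auto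
          then show "\<bar>z s $ l\<bar> + \<bar>z (Suc s) $ l\<bar> \<le> 2 * M' * x ^ s * Z" using bl[OF il, of s] bl[OF il, of "Suc s"] by linarith
        qed
        also have "\<dots> = real (card {l. i < l}) * (2 * M' * x ^ s * Z)" by simp
        also have "\<dots> \<le> N * (2 * M' * x ^ s * Z)"
          unfolding N_def using M'0 Z0 xk by (intro mult_right_mono) (auto simp: card_mono)
        finally show ?thesis using C by (simp add: mult_left_mono)
      qed
      have vc: "z k $ i = prod (r i) {0..<k} * z 0 $ i + (\<Sum>s<k. prod (r i) {Suc s..<k} * g s)" for k
        by (rule voc) (simp add: g_def)
      have step: "\<bar>z k $ i\<bar> \<le> (K + D * M') * x ^ k * Z" for k
      proof -
        have "\<bar>z k $ i\<bar> \<le> \<bar>prod (r i) {0..<k} * z 0 $ i\<bar> + (\<Sum>s<k. \<bar>prod (r i) {Suc s..<k} * g s\<bar>)"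
          unfolding vc[of k] by (rule order_trans[OF abs_triangle_ineq add_left_mono[OF sum_abs]])
        also have "\<dots> \<le> K * x ^ (2 * k) * Z + (\<Sum>s<k. K * x ^ (2 * (k - Suc s)) * (C * (N * (2 * M' * x ^ s * Z))))"
        proof (intro add_mono sum_mono)
          have "\<bar>prod (r i) {0..<k}\<bar> \<le> K * x ^ (2 * (k - 0))" by (rule rb[OF iI]) simp
          moreover have "\<bar>z 0 $ i\<bar> \<le> Z" unfolding Z_def by (rule component_le_norm_cart)
          ultimately show "\<bar>prod (r i) {0..<k} * z 0 $ i\<bar> \<le> K * x ^ (2 * k) * Z"
            unfolding abs_mult using K xk by (intro mult_mono) auto
        next
          fix s assume "s \<in> {..<k}"
          then have "Suc s \<le> k" by simp
          then have "\<bar>prod (r i) {Suc s..<k}\<bar> \<le> K * x ^ (2 * (k - Suc s))" by (rule rb[OF iI])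
          then show "\<bar>prod (r i) {Suc s..<k} * g s\<bar> \<le> K * x ^ (2 * (k - Suc s)) * (C * (N * (2 * M' * x ^ s * Z)))"
            unfolding abs_mult using gb[of s] by (intro mult_mono) auto
        qed
        also have "(\<Sum>s<k. K * x ^ (2 * (k - Suc s)) * (C * (N * (2 * M' * x ^ s * Z))))
            = K * C * N * 2 * M' * Z * (\<Sum>s<k. x ^ (2 * (k - Suc s)) * x ^ s)"
          by (simp add: sum_distrib_left algebra_simps)
        also have "\<dots> \<le> K * C * N * 2 * M' * Z * (x ^ k / (x * (1 - x)))"
          using geo_bound[OF x, of k] K C N0 M'0 Z0 by (intro mult_left_mono) auto
        also have "K * x ^ (2 * k) * Z \<le> K * x ^ k * Z"
        proof -
          have "x ^ (2 * k) \<le> x ^ k" using x by (intro power_decreasing) auto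
          then show ?thesis using K Z0 by (intro mult_right_mono mult_left_mono) auto
        qed
        also have "K * x ^ k * Z + K * C * N * 2 * M' * Z * (x ^ k / (x * (1 - x))) = (K + D * M') * x ^ k * Z"
          unfolding D_def using x1 by (simp add: field_simps)
        finally show ?thesis by simp
      qed
      have h1: "h \<ge> 1" unfolding h_def
      proof -
        have "i \<in> {l. i \<le> l}" by simp
        then have "{l. i \<le> l} \<noteq> {}" by blast
        then show "card {l. i \<le> l} \<ge> 1" by (simp add: Suc_le_eq card_gt_0_iff)
      qed
      have "K + D * M' \<le> Mh h"
      proof -
        have "(1 + D) ^ h = (1 + D) * (1 + D) ^ (h - 1)" using h1 by (metis Suc_diff_1 less_le_trans zero_less_one power_Suc)
        then have "Mh h = M' + D * M'" unfolding Mh_def M'_def by (simp add: algebra_simps)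
        moreover have "K \<le> M'" unfolding M'_def Mh_def
        proof -
          have "1 \<le> (1 + D) ^ (h - 1)" using D0 by simp
          then have "K * 1 \<le> (K + 1) * (1 + D) ^ (h - 1)" using K by (intro mult_mono) auto
          then show "K \<le> (K + 1) * (1 + D) ^ (h - 1)" by simp
        qed
        ultimately show ?thesis by simp
      qed
      then have "(K + D * M') * x ^ k * Z \<le> Mh h * x ^ k * Z" for k using xk Z0 by (intro mult_right_mono) auto
      then show ?thesis using step h_def by (meson order_trans)
    qed
  qed
  have "card {l. i \<le> l} \<le> CARD('d)" by (rule card_mono) auto
  then have "Mh (card {l. i \<le> l}) * x ^ k * Z \<le> Mh CARD('d) * x ^ k * Z"
    using xk Z0 by (intro mult_right_mono Mmono) auto
  then have "\<bar>z k $ i\<bar> \<le> Mh CARD('d) * x ^ k * Z" using main[of i] by (meson order_trans spec)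
  then show ?thesis unfolding Mh_def D_def N_def Z_def by simp
qed

lemma prod_shift_fwd: "prod (\<lambda>l. f (n + int l)) {a..<a + d} = pr f (n + int (a + d)) (n + int a)"
proof (induction d)
  case 0 then show ?case by simp
next
  case (Suc d)
  have "prod (\<lambda>l. f (n + int l)) {a..<a + Suc d} = prod (\<lambda>l. f (n + int l)) {a..<a + d} * f (n + int (a + d))"
    by (simp add: prod.atLeastLessThan_Suc)
  also have "\<dots> = f (n + int (a + d)) * pr f (n + int (a + d)) (n + int a)" using Suc by simp
  also have "\<dots> = pr f (n + int (a + d) + 1) (n + int a)" by (rule pr_step[symmetric]) simp
  finally show ?case by (simp add: algebra_simps)
qed

lemma prod_shift_bwd:
  assumes nz: "\<And>l. f l \<noteq> 0"
  shows "prod (\<lambda>l. 1 / f (n - int l - 1)) {a..<a + d} = 1 / pr f (n - int a) (n - int (a + d))"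
proof (induction d)
  case 0 then show ?case by simp
next
  case (Suc d)
  have "prod (\<lambda>l. 1 / f (n - int l - 1)) {a..<a + Suc d} = prod (\<lambda>l. 1 / f (n - int l - 1)) {a..<a + d} * (1 / f (n - int (a + d) - 1))"
    by (simp add: prod.atLeastLessThan_Suc)
  also have "\<dots> = 1 / (pr f (n - int a) (n - int (a + d)) * f (n - int (a + d) - 1))" using Suc by simp
  also have "pr f (n - int a) (n - int (a + d) - 1) = f (n - int (a + d) - 1) * pr f (n - int a) (n - int (a + d))"
    using pr_front[of "n - int (a + d) - 1" "n - int a" f] by simp
  then have "pr f (n - int a) (n - int (a + d)) * f (n - int (a + d) - 1) = pr f (n - int a) (n - int (a + Suc d))"
    by (simp add: algebra_simps)
  finally show ?case by simp
qed

lemma mv_axis: "((M :: real^'n^'m) *v axis b 1)$a = M$a$b"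
proof -
  have "(M *v axis b 1)$a = (\<Sum>c\<in>UNIV. M$a$c * (axis b 1 :: real^'n)$c)" by (simp add: matrix_vector_mult_def)
  also have "\<dots> = M$a$b * (axis b 1 :: real^'n)$b" by (rule sum_single_nonzero) (simp add: axis_def)
  finally show ?thesis by simp
qed

lemma norm_entry_bound: "(\<And>a b. \<bar>(M :: real^'n^'n)$a$b\<bar> \<le> c) \<Longrightarrow> norm M \<le> real CARD('n) * (real CARD('n) * c)"
proof -
  assume h: "\<And>a b. \<bar>M$a$b\<bar> \<le> c"
  have "norm M \<le> (\<Sum>a\<in>UNIV. \<Sum>b\<in>UNIV. \<bar>M$a$b\<bar>)" by (rule norm_le_entries)
  also have "\<dots> \<le> (\<Sum>a\<in>(UNIV::'n set). \<Sum>b\<in>(UNIV::'n set). c)"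
    apply (rule sum_mono) apply (rule sum_mono) apply (rule h) done
  finally show ?thesis by simp
qed

lemma uniform_consts:
  fixes P :: "'d::finite \<Rightarrow> real \<Rightarrow> real \<Rightarrow> bool"
  assumes ex: "\<And>i. \<exists>K \<alpha>. K > 0 \<and> \<alpha> > 0 \<and> P i K \<alpha>"
    and mono: "\<And>i K \<alpha> K' \<alpha>'. P i K \<alpha> \<Longrightarrow> K \<le> K' \<Longrightarrow> 0 < \<alpha>' \<Longrightarrow> \<alpha>' \<le> \<alpha> \<Longrightarrow> P i K' \<alpha>'"
  shows "\<exists>K \<alpha>. K > 0 \<and> \<alpha> > 0 \<and> (\<forall>i. P i K \<alpha>)"
proof -
  obtain Kf af where f: "\<And>i. Kf i > 0 \<and> af i > 0 \<and> P i (Kf i) (af i)"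
    using ex by metis
  define K where "K = (\<Sum>i\<in>UNIV. Kf i)"
  define \<alpha> where "\<alpha> = Min (range af)"
  have Ki: "Kf i \<le> K" for i unfolding K_def
    by (rule member_le_sum) (use f in \<open>auto intro: less_imp_le\<close>)
  have ai: "\<alpha> \<le> af i" for i unfolding \<alpha>_def by (rule Min_le) auto
  have a0: "\<alpha> > 0" unfolding \<alpha>_def using f by (subst Min_gr_iff) auto
  have K0: "K > 0" using Ki[of undefined] f[of undefined] by linarith
  show ?thesis using mono f Ki ai a0 K0 by blast
qed

lemma base_ED:
  fixes A :: "int \<Rightarrow> real^'d::{finite,linorder}^'d::{finite,linorder}" and q :: "'d \<Rightarrow> int \<Rightarrow> real"
  assumes ut: "\<And>n. upper_triangular (A n)" and diag: "\<And>n i. A n $i$i = q i n"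
    and nz: "\<And>i n. q i n \<noteq> 0" and bd: "\<And>n a b. \<bar>A n $a$b\<bar> \<le> Bd"
    and Bq: "\<And>i n. \<bar>1 / q i n\<bar> \<le> Bq"
    and hyp: "\<And>i. decayZ (q i) \<or> growZ (q i)"
    and sep: "\<And>n a b. a < b \<Longrightarrow> decayZ (q a) \<noteq> decayZ (q b) \<Longrightarrow> A n $a$b = 0"
  shows "has_ED A"
proof -
  define S where "S = {i. decayZ (q i)}"
  have nzA: "\<And>n i. A n $i$i \<noteq> 0" using diag nz by simp
  have inv: "\<And>n. invertible (A n)" using ut_invertible[OF ut nzA] .
  have Bd0: "Bd \<ge> 0" using bd[of 0 undefined undefined] by linarith
  have Bq0: "Bq \<ge> 0" using Bq[of undefined 0] by linarith
  have sep': "A n $a$b = 0" if "(a \<in> S) \<noteq> (b \<in> S)" for n a b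
  proof -
    consider "a < b" | "b < a" | "a = b" by fastforce
    then show ?thesis
    proof cases
      case 1 then show ?thesis using sep that S_def by auto
    next
      case 2 then show ?thesis using ut unfolding upper_triangular_def by blast
    next
      case 3 then show ?thesis using that by simp
    qed
  qed
  define P :: "((real, 'd) vec, 'd) vec" where "P = (\<chi> a b. if a = b \<and> a \<in> S then 1 else 0)"
  have Pv: "(P *v y)$a = (if a \<in> S then y$a else 0)" for y a
  proof -
    have "(P *v y)$a = (\<Sum>c\<in>UNIV. P$a$c * y$c)" by (simp add: matrix_vector_mult_def)
    also have "\<dots> = P$a$a * y$a" by (rule sum_single_nonzero) (simp add: P_def)
    finally show ?thesis by (simp add: P_def)
  qed
  have PM: "(P ** M)$a$b = (if a \<in> S then M$a$b else 0)" for M :: "((real, 'd) vec, 'd) vec" and a b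
  proof -
    have "(P ** M)$a$b = (\<Sum>c\<in>UNIV. P$a$c * M$c$b)" by (simp add: matrix_matrix_mult_def)
    also have "\<dots> = P$a$a * M$a$b" by (rule sum_single_nonzero) (simp add: P_def)
    finally show ?thesis by (simp add: P_def)
  qed
  have MP: "(M ** P)$a$b = (if b \<in> S then M$a$b else 0)" for M :: "((real, 'd) vec, 'd) vec" and a b
  proof -
    have "(M ** P)$a$b = (\<Sum>c\<in>UNIV. M$a$c * P$c$b)" by (simp add: matrix_matrix_mult_def)
    also have "\<dots> = M$a$b * P$b$b" by (rule sum_single_nonzero) (simp add: P_def)
    finally show ?thesis by (simp add: P_def)
  qed
  have idem: "P ** P = P" by (simp add: vec_eq_iff PM) (simp add: P_def)
  have PA: "P ** A n = A n ** P" for n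
    by (simp add: vec_eq_iff PM MP) (use sep' in blast)
  have Pev: "P ** evol A m n = evol A m n ** P" for m n
  proof -
    have "P ** evol A m n = evol A m n ** (P ** evol A n n)"
    proof (rule evol_unique[of A, OF inv, where f = "\<lambda>m. P ** evol A m n"])
      fix k show "P ** evol A (k+1) n = A k ** (P ** evol A k n)"
        by (simp add: evol_step[of A, OF inv] matrix_mul_assoc PA)
    qed
    then show ?thesis by simp
  qed
  have IPev: "(mat 1 - P) ** evol A m n = evol A m n ** (mat 1 - P)" for m n
    by (simp add: mm_diff_l mm_diff_r Pev)
  have IPv: "((mat 1 - P) *v y)$a = (if a \<in> S then 0 else y$a)" for y a
    by (simp add: mv_diff_l Pv)
  define Pr where "Pr i K \<alpha> \<longleftrightarrow> (i \<in> S \<longrightarrow> (\<forall>m n. n \<le> m \<longrightarrow> \<bar>pr (q i) m n\<bar> \<le> K * exp (- \<alpha> * real_of_int (m - n))))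
     \<and> (i \<notin> S \<longrightarrow> (\<forall>m n. n \<le> m \<longrightarrow> \<bar>1 / pr (q i) m n\<bar> \<le> K * exp (- \<alpha> * real_of_int (m - n))))" for i K \<alpha>
  have "\<exists>K \<alpha>. K > 0 \<and> \<alpha> > 0 \<and> (\<forall>i. Pr i K \<alpha>)"
  proof (rule uniform_consts)
    fix i show "\<exists>K \<alpha>. K > 0 \<and> \<alpha> > 0 \<and> Pr i K \<alpha>"
    proof (cases "i \<in> S")
      case True then show ?thesis unfolding Pr_def S_def decayZ_def by auto
    next
      case False then have "growZ (q i)" using hyp S_def by auto
      then show ?thesis using False unfolding Pr_def growZ_def by auto
    qed
  next
    fix i K \<alpha> K' \<alpha>' assume h: "Pr i K \<alpha>" "K \<le> K'" "0 < \<alpha>'" "\<alpha>' \<le> \<alpha>"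
    have e: "K * exp (- \<alpha> * real_of_int (m - n)) \<le> K' * exp (- \<alpha>' * real_of_int (m - n))" if "n \<le> m" for m n :: int
    proof -
      have K0: "0 \<le> K" using h(1) unfolding Pr_def
        by (cases "i \<in> S") (auto dest!: spec[of _ 0] dest: order_trans[OF abs_ge_zero])
      have "exp (- \<alpha> * real_of_int (m - n)) \<le> exp (- \<alpha>' * real_of_int (m - n))"
        using h that by (auto intro: mult_right_mono)
      then show ?thesis using h(2) K0 by (intro mult_mono) auto
    qed
    show "Pr i K' \<alpha>'" using h(1) e unfolding Pr_def by (meson order_trans)
  qed
  then obtain K \<alpha> where K: "K > 0" and a: "\<alpha> > 0" and PrK: "\<And>i. Pr i K \<alpha>" by blast
  define x where "x = exp (- \<alpha> / 2)"
  have x: "0 < x" "x < 1" unfolding x_def using a by auto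
  have xe: "exp (- \<alpha> * real d) = x ^ (2 * d)" for d :: nat
  proof -
    have "x ^ (2 * d) = exp (real (2 * d) * (- \<alpha> / 2))" unfolding x_def by (rule exp_of_nat_mult[symmetric])
    then show ?thesis by simp
  qed
  have xe2: "x ^ d = exp (- (\<alpha> / 2) * real d)" for d :: nat
    unfolding x_def using exp_of_nat_mult[of d "- \<alpha> / 2"] by (simp add: algebra_simps)
  define C where "C = Bq * Bd"
  have C0: "C \<ge> 0" unfolding C_def using Bq0 Bd0 by simp
  define Cmax where "Cmax = max Bd C"
  define M where "M = (K + 1) * (1 + 2 * K * Cmax * real CARD('d) / (x * (1 - x))) ^ CARD('d)"
  define c2 where "c2 = real CARD('d) ^ 2"
  define Pn where "Pn = max (norm P) (norm (mat 1 - P :: ((real, 'd) vec, 'd) vec))"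
  have M0: "M \<ge> 0" unfolding M_def using K x Bd0 C0 by (simp add: Cmax_def)
  have Pn0: "Pn \<ge> 0" unfolding Pn_def by (rule order_trans[OF norm_ge_zero max.cobounded1])
  have c20: "c2 \<ge> 0" unfolding c2_def by simp
  define Kf where "Kf = real CARD('d) * (real CARD('d) * (M * (c2 * Pn))) + 1"
  have Kf0: "Kf > 0" unfolding Kf_def using M0 c20 Pn0 by (simp add: add_nonneg_pos)
  have fwd: "norm (evol A m n ** P) \<le> Kf * exp (- (\<alpha> / 2) * real_of_int (m - n))" if nm: "n \<le> m" for m n
  proof -
    define k where "k = nat (m - n)"
    have mk: "m = n + int k" unfolding k_def using nm by simp
    have ent: "\<bar>(evol A m n ** P)$a$b\<bar> \<le> M * x ^ k * (c2 * Pn)" for a b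
    proof -
      define z where "z j = evol A (n + int j) n *v (P *v axis b 1)" for j :: nat
      have zS: "z (Suc j) = A (n + int j) *v z j" for j
        unfolding z_def using evol_step[of A, OF inv, of "n + int j" n]
        by (simp add: matrix_vector_mul_assoc matrix_mul_assoc algebra_simps)
      have zout: "z j $ i = 0" if "i \<notin> S" for i j
      proof -
        have "z j = P *v (evol A (n + int j) n *v axis b 1)"
          unfolding z_def by (simp add: matrix_vector_mul_assoc Pev)
        then show ?thesis using Pv that by simp
      qed
      have rec: "\<bar>z (Suc j) $ i - q i (n + int j) * z j $ i\<bar> \<le> Cmax * (\<Sum>l\<in>{l. i < l}. \<bar>z j $ l\<bar> + \<bar>z (Suc j) $ l\<bar>)"
        if "i \<in> S" for i j
      proof -
        have "(A (n + int j) *v z j)$i = (\<Sum>l\<in>UNIV. A (n + int j)$i$l * z j$l)" by (simp add: matrix_vector_mult_def)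
        also have "\<dots> = (\<Sum>l\<in>{l. l < i} \<union> {i} \<union> {l. i < l}. A (n + int j)$i$l * z j$l)"
          by (rule sum.cong) (auto simp: not_less_iff_gr_or_eq)
        also have "\<dots> = (\<Sum>l\<in>{l. l < i}. A (n + int j)$i$l * z j$l) + A (n + int j)$i$i * z j$i + (\<Sum>l\<in>{l. i < l}. A (n + int j)$i$l * z j$l)"
          by (subst sum.union_disjoint, auto)+
        also have "(\<Sum>l\<in>{l. l < i}. A (n + int j)$i$l * z j$l) = 0"
          using ut unfolding upper_triangular_def by simp
        finally have "z (Suc j) $ i - q i (n + int j) * z j $ i = (\<Sum>l\<in>{l. i < l}. A (n + int j)$i$l * z j$l)"
          using zS diag by simp
        then have "\<bar>z (Suc j) $ i - q i (n + int j) * z j $ i\<bar> \<le> (\<Sum>l\<in>{l. i < l}. Bd * \<bar>z j$l\<bar>)"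
          by (simp add: order_trans[OF sum_abs] sum_mono abs_mult mult_right_mono bd)
        also have "\<dots> \<le> (\<Sum>l\<in>{l. i < l}. Cmax * (\<bar>z j $ l\<bar> + \<bar>z (Suc j) $ l\<bar>))"
          by (rule sum_mono, rule mult_mono) (auto simp: Cmax_def Bd0 le_max_iff_disj)
        finally show ?thesis by (simp add: sum_distrib_left)
      qed
      have rb: "\<bar>prod (\<lambda>l. q i (n + int l)) {a'..<b'}\<bar> \<le> K * x ^ (2 * (b' - a'))" if "i \<in> S" "a' \<le> b'" for i a' b'
      proof -
        have F1: "prod (\<lambda>l. q i (n + int l)) {a'..<b'} = pr (q i) (n + int b') (n + int a')"
          using prod_shift_fwd[of "q i" n a' "b' - a'"] that by simp
        have F2: "\<bar>pr (q i) (n + int b') (n + int a')\<bar> \<le> K * exp (- \<alpha> * real_of_int (n + int b' - (n + int a')))"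
        proof -
          have h: "\<forall>m n. n \<le> m \<longrightarrow> \<bar>pr (q i) m n\<bar> \<le> K * exp (- \<alpha> * real_of_int (m - n))"
            using PrK[of i] that unfolding Pr_def by auto
          show ?thesis using h[rule_format, of "n + int a'" "n + int b'"] that by simp
        qed
        have F3: "K * exp (- \<alpha> * real_of_int (n + int b' - (n + int a'))) = K * x ^ (2 * (b' - a'))"
        proof -
          have eq1: "real_of_int (n + int b' - (n + int a')) = real (b' - a')" using that by simp
          show ?thesis by (simp only: eq1 xe)
        qed
        have F4: "\<bar>pr (q i) (n + int b') (n + int a')\<bar> \<le> K * x ^ (2 * (b' - a'))" using F2 F3 by linarith
        show ?thesis by (subst F1) (rule F4)
      qed
      have zk: "\<bar>z k $ a\<bar> \<le> M * x ^ k * norm (z 0)"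
        unfolding M_def
        by (rule coord_stab[where r = "\<lambda>i l. q i (n + int l)" and I = S, OF K x _ rb zout rec])
           (auto simp: Cmax_def C0 le_max_iff_disj)
      have z0: "norm (z 0) \<le> c2 * Pn"
      proof -
        have "norm (z 0) = norm (P *v axis b 1)" unfolding z_def by simp
        also have "\<dots> \<le> c2 * norm P * norm (axis b (1::real))" unfolding c2_def by (rule norm_mv)
        also have "\<dots> \<le> c2 * Pn" using c20 by (simp add: Pn_def mult_left_mono)
        finally show ?thesis .
      qed
      have zeq: "z k $ a = (evol A m n ** P)$a$b"
        unfolding z_def mk by (simp add: matrix_vector_mul_assoc mv_axis)
      have "M * x ^ k * norm (z 0) \<le> M * x ^ k * (c2 * Pn)"
        using z0 M0 x by (intro mult_left_mono) auto
      then show ?thesis using zk zeq by linarith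
    qed
    have "norm (evol A m n ** P) \<le> real CARD('d) * (real CARD('d) * (M * x ^ k * (c2 * Pn)))"
      by (rule norm_entry_bound) (rule ent)
    also have "\<dots> = real CARD('d) * (real CARD('d) * (M * (c2 * Pn))) * x ^ k" by (simp add: algebra_simps)
    also have "\<dots> \<le> Kf * x ^ k" unfolding Kf_def using x by (intro mult_right_mono) auto
    also have "x ^ k = exp (- (\<alpha> / 2) * real_of_int (m - n))" unfolding xe2 k_def using nm by simp
    finally show ?thesis .
  qed
  have bwd: "norm (evol A m n ** (mat 1 - P)) \<le> Kf * exp ((\<alpha> / 2) * real_of_int (m - n))" if nm: "m \<le> n" for m n
  proof -
    define k where "k = nat (n - m)"
    have mk: "m = n - int k" unfolding k_def using nm by simp
    have ent: "\<bar>(evol A m n ** (mat 1 - P))$a$b\<bar> \<le> M * x ^ k * (c2 * Pn)" for a b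
    proof -
      define z where "z j = evol A (n - int j) n *v ((mat 1 - P) *v axis b 1)" for j :: nat
      have zS: "z j = A (n - int j - 1) *v z (Suc j)" for j
        unfolding z_def using evol_step[of A, OF inv, of "n - int j - 1" n]
        by (simp add: matrix_vector_mul_assoc matrix_mul_assoc algebra_simps)
      have zout: "z j $ i = 0" if "i \<notin> - S" for i j
      proof -
        have "z j = (mat 1 - P) *v (evol A (n - int j) n *v axis b 1)"
          unfolding z_def by (simp add: matrix_vector_mul_assoc IPev)
        then show ?thesis using IPv that by simp
      qed
      have rec: "\<bar>z (Suc j) $ i - 1 / q i (n - int j - 1) * z j $ i\<bar> \<le> Cmax * (\<Sum>l\<in>{l. i < l}. \<bar>z j $ l\<bar> + \<bar>z (Suc j) $ l\<bar>)"
        if "i \<in> - S" for i j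
      proof -
        let ?B = "A (n - int j - 1)"
        have "(?B *v z (Suc j))$i = (\<Sum>l\<in>UNIV. ?B$i$l * z (Suc j)$l)" by (simp add: matrix_vector_mult_def)
        also have "\<dots> = (\<Sum>l\<in>{l. l < i} \<union> {i} \<union> {l. i < l}. ?B$i$l * z (Suc j)$l)"
          by (rule sum.cong) (auto simp: not_less_iff_gr_or_eq)
        also have "\<dots> = (\<Sum>l\<in>{l. l < i}. ?B$i$l * z (Suc j)$l) + ?B$i$i * z (Suc j)$i + (\<Sum>l\<in>{l. i < l}. ?B$i$l * z (Suc j)$l)"
          by (subst sum.union_disjoint, auto)+
        also have "(\<Sum>l\<in>{l. l < i}. ?B$i$l * z (Suc j)$l) = 0"
          using ut unfolding upper_triangular_def by simp
        finally have e: "z j $ i = q i (n - int j - 1) * z (Suc j)$i + (\<Sum>l\<in>{l. i < l}. ?B$i$l * z (Suc j)$l)"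
          using zS[of j] diag by simp
        have "z (Suc j) $ i - 1 / q i (n - int j - 1) * z j $ i = - (1 / q i (n - int j - 1)) * (\<Sum>l\<in>{l. i < l}. ?B$i$l * z (Suc j)$l)"
          unfolding e using nz[of i "n - int j - 1"] by (simp add: field_simps)
        then have "\<bar>z (Suc j) $ i - 1 / q i (n - int j - 1) * z j $ i\<bar> = \<bar>1 / q i (n - int j - 1)\<bar> * \<bar>\<Sum>l\<in>{l. i < l}. ?B$i$l * z (Suc j)$l\<bar>"
          by (simp add: abs_mult)
        also have "\<dots> \<le> Bq * (\<Sum>l\<in>{l. i < l}. Bd * \<bar>z (Suc j)$l\<bar>)"
        proof (intro mult_mono)
          show "\<bar>\<Sum>l\<in>{l. i < l}. ?B$i$l * z (Suc j)$l\<bar> \<le> (\<Sum>l\<in>{l. i < l}. Bd * \<bar>z (Suc j)$l\<bar>)"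
            by (simp add: order_trans[OF sum_abs] sum_mono abs_mult mult_right_mono bd)
        qed (use Bq Bq0 in auto)
        also have "\<dots> = (\<Sum>l\<in>{l. i < l}. C * \<bar>z (Suc j)$l\<bar>)" unfolding C_def by (simp add: sum_distrib_left algebra_simps)
        also have "\<dots> \<le> (\<Sum>l\<in>{l. i < l}. Cmax * (\<bar>z j $ l\<bar> + \<bar>z (Suc j) $ l\<bar>))"
          by (rule sum_mono, rule mult_mono) (auto simp: Cmax_def C0 le_max_iff_disj)
        finally show ?thesis by (simp add: sum_distrib_left)
      qed
      have rb: "\<bar>prod (\<lambda>l. 1 / q i (n - int l - 1)) {a'..<b'}\<bar> \<le> K * x ^ (2 * (b' - a'))" if "i \<in> - S" "a' \<le> b'" for i a' b'
      proof -
        have F1: "prod (\<lambda>l. 1 / q i (n - int l - 1)) {a'..<b'} = 1 / pr (q i) (n - int a') (n - int b')"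
          using prod_shift_bwd[of "q i" n a' "b' - a'"] nz that by simp
        have F2: "\<bar>1 / pr (q i) (n - int a') (n - int b')\<bar> \<le> K * exp (- \<alpha> * real_of_int (n - int a' - (n - int b')))"
        proof -
          have h: "\<forall>m n. n \<le> m \<longrightarrow> \<bar>1 / pr (q i) m n\<bar> \<le> K * exp (- \<alpha> * real_of_int (m - n))"
            using PrK[of i] that unfolding Pr_def by auto
          show ?thesis using h[rule_format, of "n - int b'" "n - int a'"] that by simp
        qed
        have F3: "K * exp (- \<alpha> * real_of_int (n - int a' - (n - int b'))) = K * x ^ (2 * (b' - a'))"
        proof -
          have eq1: "real_of_int (n - int a' - (n - int b')) = real (b' - a')" using that by simp
          show ?thesis by (simp only: eq1 xe)
        qed
        have F4: "\<bar>1 / pr (q i) (n - int a') (n - int b')\<bar> \<le> K * x ^ (2 * (b' - a'))" using F2 F3 by linarith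
        show ?thesis by (subst F1) (rule F4)
      qed
      have zk: "\<bar>z k $ a\<bar> \<le> M * x ^ k * norm (z 0)"
        unfolding M_def
        by (rule coord_stab[where r = "\<lambda>i l. 1 / q i (n - int l - 1)" and I = "- S", OF K x _ rb zout rec])
           (auto simp: Cmax_def C0 le_max_iff_disj)
      have z0: "norm (z 0) \<le> c2 * Pn"
      proof -
        have "norm (z 0) = norm ((mat 1 - P) *v axis b 1)" unfolding z_def by simp
        also have "\<dots> \<le> c2 * norm (mat 1 - P) * norm (axis b (1::real))" unfolding c2_def by (rule norm_mv)
        also have "\<dots> \<le> c2 * Pn" using c20 by (simp add: Pn_def mult_left_mono)
        finally show ?thesis .
      qed
      have zeq: "z k $ a = (evol A m n ** (mat 1 - P))$a$b"
        unfolding z_def mk by (simp add: matrix_vector_mul_assoc mv_axis)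
      have "M * x ^ k * norm (z 0) \<le> M * x ^ k * (c2 * Pn)"
        using z0 M0 x by (intro mult_left_mono) auto
      then show ?thesis using zk zeq by linarith
    qed
    have "norm (evol A m n ** (mat 1 - P)) \<le> real CARD('d) * (real CARD('d) * (M * x ^ k * (c2 * Pn)))"
      by (rule norm_entry_bound) (rule ent)
    also have "\<dots> = real CARD('d) * (real CARD('d) * (M * (c2 * Pn))) * x ^ k" by (simp add: algebra_simps)
    also have "\<dots> \<le> Kf * x ^ k" unfolding Kf_def using x by (intro mult_right_mono) auto
    also have "x ^ k = exp ((\<alpha> / 2) * real_of_int (m - n))"
    proof -
      have rk: "real k = real_of_int (n - m)" unfolding k_def using nm by simp
      have "- (\<alpha> / 2) * real k = (\<alpha> / 2) * real_of_int (m - n)" unfolding rk by (simp add: field_simps)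
      then show ?thesis unfolding xe2 by simp
    qed
    finally show ?thesis .
  qed
  show ?thesis unfolding has_ED_def
    using Kf0 a idem Pev fwd bwd
    by (intro exI[of _ Kf] exI[of _ "\<alpha> / 2"] exI[of _ "\<lambda>n. P"]) auto
qed

definition Emat :: "'d::finite \<Rightarrow> 'd \<Rightarrow> real^'d^'d" where
  "Emat j k = (\<chi> a b. if a = j \<and> b = k then 1 else 0)"

lemma shearL: "((mat 1 + c *\<^sub>R Emat j k) ** M)$a$b = M$a$b + (if a = j then c * M$k$b else 0)"
proof -
  have "((mat 1 + c *\<^sub>R Emat j k) ** M)$a$b = (\<Sum>d\<in>UNIV. (mat 1 + c *\<^sub>R Emat j k)$a$d * M$d$b)"
    by (simp add: matrix_matrix_mult_def)
  also have "\<dots> = (\<Sum>d\<in>UNIV. (if d = a then M$d$b else 0) + (if a = j \<and> d = k then c * M$d$b else 0))"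
    by (rule sum.cong) (auto simp: Emat_def mat_def algebra_simps)
  also have "\<dots> = M$a$b + (if a = j then c * M$k$b else 0)"
  proof -
    have s1: "(\<Sum>d\<in>UNIV. if d = a then M$d$b else 0) = M$a$b" by (simp add: sum.delta)
    have s2: "(\<Sum>d\<in>UNIV. if a = j \<and> d = k then c * M$d$b else 0) = (if a = j then c * M$k$b else 0)"
      by (cases "a = j") (simp_all add: sum.delta)
    show ?thesis by (simp only: sum.distrib s1 s2)
  qed
  finally show ?thesis .
qed

lemma shearR: "(M ** (mat 1 + c *\<^sub>R Emat j k))$a$b = M$a$b + (if b = k then c * M$a$j else 0)"
proof -
  have "(M ** (mat 1 + c *\<^sub>R Emat j k))$a$b = (\<Sum>d\<in>UNIV. M$a$d * (mat 1 + c *\<^sub>R Emat j k)$d$b)"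
    by (simp add: matrix_matrix_mult_def)
  also have "\<dots> = (\<Sum>d\<in>UNIV. (if d = b then M$a$d else 0) + (if d = j \<and> b = k then c * M$a$d else 0))"
    by (rule sum.cong) (auto simp: Emat_def mat_def algebra_simps)
  also have "\<dots> = M$a$b + (if b = k then c * M$a$j else 0)"
  proof -
    have s1: "(\<Sum>d\<in>UNIV. if d = b then M$a$d else 0) = M$a$b" by (simp add: sum.delta)
    have s2: "(\<Sum>d\<in>UNIV. if d = j \<and> b = k then c * M$a$d else 0) = (if b = k then c * M$a$j else 0)"
      by (cases "b = k") (simp_all add: sum.delta)
    show ?thesis by (simp only: sum.distrib s1 s2)
  qed
  finally show ?thesis .
qed

lemma pr_div: "pr (\<lambda>l. a l / b l) m n = pr a m n / pr b m n"
  unfolding pr_def by (rule prod_dividef)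

lemma ratio_dich:
  assumes nzj: "\<And>n. qj n \<noteq> 0" and nzk: "\<And>n. qk n \<noteq> 0"
    and ty: "(decayZ qj \<and> growZ qk) \<or> (growZ qj \<and> decayZ qk)"
  shows "decayZ (\<lambda>n. qj n / qk n) \<or> growZ (\<lambda>n. qj n / qk n)"
  using ty
proof
  assume "decayZ qj \<and> growZ qk"
  then obtain K1 a1 K2 a2 where K1: "K1 > 0" "a1 > 0" "\<forall>m n. n \<le> m \<longrightarrow> \<bar>pr qj m n\<bar> \<le> K1 * exp (- a1 * real_of_int (m - n))"
    and K2: "K2 > 0" "a2 > 0" "\<forall>m n. n \<le> m \<longrightarrow> \<bar>1 / pr qk m n\<bar> \<le> K2 * exp (- a2 * real_of_int (m - n))"
    unfolding decayZ_def growZ_def by blast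
  have "\<bar>pr (\<lambda>n. qj n / qk n) m n\<bar> \<le> (K1 * K2) * exp (- a1 * real_of_int (m - n))" if nm: "n \<le> m" for m n
  proof -
    have "\<bar>pr (\<lambda>n. qj n / qk n) m n\<bar> = \<bar>pr qj m n\<bar> * \<bar>1 / pr qk m n\<bar>" by (simp add: pr_div abs_mult abs_divide)
    also have "\<dots> \<le> (K1 * exp (- a1 * real_of_int (m - n))) * (K2 * exp (- a2 * real_of_int (m - n)))"
      using K1 K2 nm by (intro mult_mono) auto
    also have "\<dots> \<le> (K1 * exp (- a1 * real_of_int (m - n))) * (K2 * 1)"
      using K1 K2 nm by (intro mult_left_mono) auto
    finally show ?thesis by (simp add: algebra_simps)
  qed
  then show ?thesis unfolding decayZ_def using K1 K2 by (intro disjI1 exI[of _ "K1 * K2"] exI[of _ a1]) auto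
next
  assume "growZ qj \<and> decayZ qk"
  then obtain K1 a1 K2 a2 where K1: "K1 > 0" "a1 > 0" "\<forall>m n. n \<le> m \<longrightarrow> \<bar>1 / pr qj m n\<bar> \<le> K1 * exp (- a1 * real_of_int (m - n))"
    and K2: "K2 > 0" "a2 > 0" "\<forall>m n. n \<le> m \<longrightarrow> \<bar>pr qk m n\<bar> \<le> K2 * exp (- a2 * real_of_int (m - n))"
    unfolding decayZ_def growZ_def by blast
  have "\<bar>1 / pr (\<lambda>n. qj n / qk n) m n\<bar> \<le> (K1 * K2) * exp (- a1 * real_of_int (m - n))" if nm: "n \<le> m" for m n
  proof -
    have "\<bar>1 / pr (\<lambda>n. qj n / qk n) m n\<bar> = \<bar>1 / pr qj m n\<bar> * \<bar>pr qk m n\<bar>" by (simp add: pr_div abs_mult abs_divide)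
    also have "\<dots> \<le> (K1 * exp (- a1 * real_of_int (m - n))) * (K2 * exp (- a2 * real_of_int (m - n)))"
      using K1 K2 nm by (intro mult_mono) auto
    also have "\<dots> \<le> (K1 * exp (- a1 * real_of_int (m - n))) * (K2 * 1)"
      using K1 K2 nm by (intro mult_left_mono) auto
    finally show ?thesis by (simp add: algebra_simps)
  qed
  then show ?thesis unfolding growZ_def using K1 K2 by (intro disjI2 exI[of _ "K1 * K2"] exI[of _ a1]) auto
qed

lemma shear:
  fixes A :: "int \<Rightarrow> real^'d::{finite,linorder}^'d::{finite,linorder}" and q :: "'d \<Rightarrow> int \<Rightarrow> real"
  assumes ut: "\<And>n. upper_triangular (A n)" and diag: "\<And>n i. A n $i$i = q i n"
    and nz: "\<And>i n. q i n \<noteq> 0" and bd: "\<And>n a b. \<bar>A n $a$b\<bar> \<le> Bd"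
    and Bq: "\<And>i n. \<bar>1 / q i n\<bar> \<le> Bq"
    and hyp: "\<And>i. decayZ (q i) \<or> growZ (q i)"
    and jk: "j < k" and ty: "decayZ (q j) \<noteq> decayZ (q k)"
  shows "\<exists>A' Bd'. (\<forall>n. upper_triangular (A' n)) \<and> (\<forall>n i. A' n $i$i = q i n) \<and> (\<forall>n a b. \<bar>A' n $a$b\<bar> \<le> Bd')
     \<and> (\<forall>n. A' n $j$k = 0) \<and> (\<forall>n a b. A' n $a$b \<noteq> A n $a$b \<longrightarrow> (b = k \<and> a \<le> j) \<or> (a = j \<and> k \<le> b))
     \<and> (has_ED A' \<longrightarrow> has_ED A)"
proof -
  have Bd0: "Bd \<ge> 0" using bd[of 0 undefined undefined] by linarith
  have Bq0: "Bq \<ge> 0" using Bq[of undefined 0] by linarith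
  have kj: "k \<noteq> j" using jk by simp
  have Akj: "A n $k$j = 0" for n using ut jk unfolding upper_triangular_def by blast
  define r where "r n = q j n / q k n" for n
  define f where "f n = A n $j$k / q k n" for n
  have rnz: "r n \<noteq> 0" for n unfolding r_def using nz by simp
  have tyc: "(decayZ (q j) \<and> growZ (q k)) \<or> (growZ (q j) \<and> decayZ (q k))" using ty hyp[of j] hyp[of k] by blast
  have rd: "decayZ r \<or> growZ r" unfolding r_def by (rule ratio_dich[OF nz nz tyc])
  have fb: "\<bar>f n\<bar> \<le> Bd * Bq" for n
  proof -
    have "\<bar>f n\<bar> = \<bar>A n $j$k\<bar> * \<bar>1 / q k n\<bar>" unfolding f_def by (simp add: abs_mult abs_divide)
    also have "\<dots> \<le> Bd * Bq" using bd Bq Bd0 by (intro mult_mono) auto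
    finally show ?thesis .
  qed
  obtain t Bt where trec: "\<And>n. t (n+1) = r n * t n + f n" and tb: "\<And>n. \<bar>t n\<bar> \<le> Bt"
    using scalar_bounded_sol[of r f, OF rnz rd fb] by blast
  have Bt0: "Bt \<ge> 0" using tb[of 0] by linarith
  have tq: "t (n+1) * q k n = q j n * t n + A n $j$k" for n
    using trec[of n] nz[of k n] unfolding r_def f_def by (simp add: field_simps)
  define T where "T n = mat 1 + t n *\<^sub>R Emat j k" for n
  define Ti where "Ti n = mat 1 + (- t n) *\<^sub>R Emat j k" for n
  define A' where "A' n = (\<chi> a b. A n $a$b + (if b = k then t n * A n $a$j else 0) - (if a = j then t (n+1) * A n $k$b else 0))" for n
  have A'e: "A' n $a$b = A n $a$b + (if b = k then t n * A n $a$j else 0) - (if a = j then t (n+1) * A n $k$b else 0)" for n a b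
    unfolding A'_def by simp
  have Ee: "(mat 1 + c *\<^sub>R Emat j k :: ((real,'d) vec,'d) vec)$a$b = (if a = b then 1 else 0) + (if a = j \<and> b = k then c else 0)" for c a b
    by (simp add: Emat_def mat_def)
  have TTi: "T n ** Ti n = mat 1" for n
  proof -
    have "(T n ** Ti n)$a$b = (mat 1 :: ((real,'d) vec,'d) vec)$a$b" for a b
      unfolding T_def Ti_def shearL using kj by (simp add: Ee mat_def Emat_def)
    then show ?thesis by (simp add: vec_eq_iff)
  qed
  have TiT: "Ti n ** T n = mat 1" for n
  proof -
    have "(Ti n ** T n)$a$b = (mat 1 :: ((real,'d) vec,'d) vec)$a$b" for a b
      unfolding T_def Ti_def shearL using kj by (simp add: Ee mat_def Emat_def)
    then show ?thesis by (simp add: vec_eq_iff)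
  qed
  have rel: "A n ** T n = T (n+1) ** A' n" for n
  proof -
    have "(A n ** T n)$a$b = (T (n+1) ** A' n)$a$b" for a b
    proof -
      have "(T (n+1) ** A' n)$a$b = A' n $a$b + (if a = j then t (n+1) * A' n $k$b else 0)"
        unfolding T_def by (rule shearL)
      also have "A' n $k$b = A n $k$b" using kj Akj by (simp add: A'e)
      finally have "(T (n+1) ** A' n)$a$b = A n $a$b + (if b = k then t n * A n $a$j else 0)"
        by (simp add: A'e)
      moreover have "(A n ** T n)$a$b = A n $a$b + (if b = k then t n * A n $a$j else 0)"
        unfolding T_def by (rule shearR)
      ultimately show ?thesis by simp
    qed
    then show ?thesis by (simp add: vec_eq_iff)
  qed
  have utA': "upper_triangular (A' n)" for n
    unfolding upper_triangular_def
  proof (intro allI impI)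
    fix a b :: 'd assume ba: "b < a"
    have "A n $a$b = 0" using ut ba unfolding upper_triangular_def by blast
    moreover have "b = k \<Longrightarrow> A n $a$j = 0" using ut ba jk unfolding upper_triangular_def by auto
    moreover have "a = j \<Longrightarrow> A n $k$b = 0" using ut ba jk unfolding upper_triangular_def by auto
    ultimately show "A' n $a$b = 0" by (simp add: A'e)
  qed
  have dA': "A' n $i$i = q i n" for n i
    using Akj kj by (simp add: A'e diag)
  have bA': "\<bar>A' n $a$b\<bar> \<le> Bd + Bt * Bd + Bt * Bd" for n a b
  proof -
    have "\<bar>A' n $a$b\<bar> \<le> \<bar>A n $a$b\<bar> + \<bar>if b = k then t n * A n $a$j else 0\<bar> + \<bar>if a = j then t (n+1) * A n $k$b else 0\<bar>"
      unfolding A'e by linarith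
    moreover have "\<bar>if b = k then t n * A n $a$j else 0\<bar> \<le> Bt * Bd"
      using tb bd Bt0 Bd0 by (auto simp: abs_mult intro: mult_mono)
    moreover have "\<bar>if a = j then t (n+1) * A n $k$b else 0\<bar> \<le> Bt * Bd"
      using tb bd Bt0 Bd0 by (auto simp: abs_mult intro: mult_mono)
    ultimately show ?thesis using bd[of n a b] by linarith
  qed
  have zA': "A' n $j$k = 0" for n
    using tq[of n] kj by (simp add: A'e diag algebra_simps)
  have chA': "(b = k \<and> a \<le> j) \<or> (a = j \<and> k \<le> b)" if "A' n $a$b \<noteq> A n $a$b" for n a b
  proof -
    have "(b = k \<and> A n $a$j \<noteq> 0) \<or> (a = j \<and> A n $k$b \<noteq> 0)" using that by (auto simp: A'e split: if_splits)
    moreover have "A n $a$j \<noteq> 0 \<Longrightarrow> a \<le> j" using ut unfolding upper_triangular_def by (meson not_le)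
    moreover have "A n $k$b \<noteq> 0 \<Longrightarrow> k \<le> b" using ut unfolding upper_triangular_def by (meson not_le)
    ultimately show ?thesis by blast
  qed
  have nzA: "\<And>n i. A n $i$i \<noteq> 0" using diag nz by simp
  have nzA': "\<And>n i. A' n $i$i \<noteq> 0" using dA' nz by simp
  have invA: "\<And>n. invertible (A n)" using ut_invertible[OF ut nzA] .
  have invA': "\<And>n. invertible (A' n)" using ut_invertible[OF utA' nzA'] .
  define BT where "BT = real CARD('d) * (real CARD('d) * (1 + Bt))"
  have Tb: "norm (T n) \<le> BT" for n
    unfolding BT_def
  proof (rule norm_entry_bound)
    fix a b show "\<bar>T n $a$b\<bar> \<le> 1 + Bt" unfolding T_def Ee using tb[of n] Bt0 by auto
  qed
  have Tib: "norm (Ti n) \<le> BT" for n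
    unfolding BT_def
  proof (rule norm_entry_bound)
    fix a b show "\<bar>Ti n $a$b\<bar> \<le> 1 + Bt" unfolding Ti_def Ee using tb[of n] Bt0 by auto
  qed
  have "has_ED A' \<longrightarrow> has_ED A"
    using ED_transfer[of A A' T Ti BT, OF invA invA' TTi TiT rel Tb Tib] by blast
  then show ?thesis using utA' dA' bA' zA' chA' by blast
qed

definition idx :: "'d::{finite,linorder} \<Rightarrow> nat" where "idx a = card {b. b < a}"

lemma idx_less: "idx (a::'d::{finite,linorder}) < CARD('d)"
proof -
  have "{b. b < a} \<subset> (UNIV :: 'd set)" by auto
  then show ?thesis using psubset_card_mono[of UNIV "{b. b < a}"] by (simp add: idx_def)
qed

lemma idx_mono: "a < b \<Longrightarrow> idx (a::'d::{finite,linorder}) < idx b"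
proof -
  assume ab: "a < b"
  have "{c. c < a} \<subset> {c. c < b}"
  proof
    show "{c. c < a} \<subseteq> {c. c < b}" using ab by auto
    show "{c. c < a} \<noteq> {c. c < b}"
    proof
      assume "{c. c < a} = {c. c < b}"
      then have "a \<in> {c. c < a}" using ab by blast
      then show False by simp
    qed
  qed
  then show ?thesis unfolding idx_def by (rule psubset_card_mono[OF finite])
qed

lemma idx_inj: "idx (a::'d::{finite,linorder}) = idx b \<Longrightarrow> a = b"
  by (metis idx_mono less_irrefl linorder_neqE)

definition rk :: "'d::{finite,linorder} \<Rightarrow> 'd \<Rightarrow> nat" where
  "rk a b = idx b * CARD('d) + (CARD('d) - 1 - idx a)"

lemma rk_bound: "rk (a::'d::{finite,linorder}) b < CARD('d) * CARD('d)"
proof -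
  have "idx b \<le> CARD('d) - 1" "CARD('d) - 1 - idx a \<le> CARD('d) - 1" using idx_less[of b] by auto
  then have "rk a b \<le> (CARD('d) - 1) * CARD('d) + (CARD('d) - 1)" unfolding rk_def
    by (intro add_mono mult_right_mono) auto
  also have "\<dots> < CARD('d) * CARD('d)"
  proof -
    have c: "CARD('d) > 0" by simp
    then obtain c' where "CARD('d) = Suc c'" using gr0_implies_Suc by blast
    then show ?thesis by simp
  qed
  finally show ?thesis .
qed

lemma rk_inj: "rk (a::'d::{finite,linorder}) b = rk a' b' \<Longrightarrow> a = a' \<and> b = b'"
proof -
  assume h: "rk a b = rk a' b'"
  let ?N = "CARD('d)"
  have l1: "?N - 1 - idx a < ?N" "?N - 1 - idx a' < ?N" using idx_less[of a] idx_less[of a'] by auto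
  have "rk a b div ?N = idx b" unfolding rk_def using l1(1) by simp
  moreover have "rk a' b' div ?N = idx b'" unfolding rk_def using l1(2) by simp
  ultimately have "idx b = idx b'" using h by simp
  then have bb: "b = b'" by (rule idx_inj)
  have "rk a b mod ?N = ?N - 1 - idx a" unfolding rk_def using l1(1) by simp
  moreover have "rk a' b' mod ?N = ?N - 1 - idx a'" unfolding rk_def using l1(2) by simp
  ultimately have "?N - 1 - idx a = ?N - 1 - idx a'" using h by simp
  then have "idx a = idx a'" using idx_less[of a] idx_less[of a'] by simp
  then show ?thesis using bb idx_inj by blast
qed

lemma rk_col: "a < j \<Longrightarrow> rk j k < rk (a::'d::{finite,linorder}) k"
  unfolding rk_def using idx_mono[of a j] idx_less[of j] by simp

lemma rk_row: "k < b \<Longrightarrow> rk j k < rk j (b::'d::{finite,linorder})"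
proof -
  assume kb: "k < b"
  have "idx k * CARD('d) < idx b * CARD('d)" using idx_mono[OF kb] by simp
  then show ?thesis unfolding rk_def by simp
qed

lemma dir_I:
  fixes q :: "'d::{finite,linorder} \<Rightarrow> int \<Rightarrow> real"
  assumes nz: "\<And>i n. q i n \<noteq> 0" and Bq: "\<And>i n. \<bar>1 / q i n\<bar> \<le> Bq"
    and hyp: "\<And>i. decayZ (q i) \<or> growZ (q i)"
  shows "\<forall>A :: int \<Rightarrow> ((real,'d) vec,'d) vec. \<forall>Bd. (\<forall>n. upper_triangular (A n)) \<and> (\<forall>n i. A n $i$i = q i n)
      \<and> (\<forall>n a b. \<bar>A n $a$b\<bar> \<le> Bd)
      \<and> (\<forall>n a b. a < b \<and> decayZ (q a) \<noteq> decayZ (q b) \<and> rk a b < CARD('d) * CARD('d) - s \<longrightarrow> A n $a$b = 0)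
      \<longrightarrow> has_ED A"
proof (induction s)
  case 0
  show ?case
  proof (intro allI impI)
    fix A :: "int \<Rightarrow> ((real,'d) vec,'d) vec" and Bd
    assume h: "(\<forall>n. upper_triangular (A n)) \<and> (\<forall>n i. A n $i$i = q i n) \<and> (\<forall>n a b. \<bar>A n $a$b\<bar> \<le> Bd)
      \<and> (\<forall>n a b. a < b \<and> decayZ (q a) \<noteq> decayZ (q b) \<and> rk a b < CARD('d) * CARD('d) - 0 \<longrightarrow> A n $a$b = 0)"
    show "has_ED A"
    proof (rule base_ED[of A q Bd Bq])
      fix n a b assume ab: "a < b" "decayZ (q a) \<noteq> decayZ (q b)"
      have "rk a b < CARD('d) * CARD('d)" by (rule rk_bound)
      then show "A n $a$b = 0" using h ab by auto
    qed (use h nz Bq hyp in auto)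
  qed
next
  case (Suc s)
  let ?NN = "CARD('d) * CARD('d)"
  show ?case
  proof (intro allI impI)
    fix A :: "int \<Rightarrow> ((real,'d) vec,'d) vec" and Bd
    assume h: "(\<forall>n. upper_triangular (A n)) \<and> (\<forall>n i. A n $i$i = q i n) \<and> (\<forall>n a b. \<bar>A n $a$b\<bar> \<le> Bd)
      \<and> (\<forall>n a b. a < b \<and> decayZ (q a) \<noteq> decayZ (q b) \<and> rk a b < ?NN - Suc s \<longrightarrow> A n $a$b = 0)"
    show "has_ED A"
    proof (cases "\<exists>j k. j < k \<and> decayZ (q j) \<noteq> decayZ (q k) \<and> rk j k = ?NN - Suc s \<and> s < ?NN")
      case False
      have "\<forall>n a b. a < b \<and> decayZ (q a) \<noteq> decayZ (q b) \<and> rk a b < ?NN - s \<longrightarrow> A n $a$b = 0"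
      proof (intro allI impI)
        fix n a b assume ab: "a < b \<and> decayZ (q a) \<noteq> decayZ (q b) \<and> rk a b < ?NN - s"
        have "rk a b < ?NN - Suc s"
        proof (cases "s < ?NN")
          case True
          then have "rk a b \<noteq> ?NN - Suc s" using False ab by blast
          then show ?thesis using ab by linarith
        next
          case False then show ?thesis using ab by simp
        qed
        then show "A n $a$b = 0" using h ab by blast
      qed
      then show ?thesis using Suc.IH h by blast
    next
      case True
      then obtain j k where jk: "j < k" and ty: "decayZ (q j) \<noteq> decayZ (q k)" and r: "rk j k = ?NN - Suc s"
        and sN: "s < ?NN" by blast
      obtain A' Bd' where A': "\<forall>n. upper_triangular (A' n)" "\<forall>n i. A' n $i$i = q i n" "\<forall>n a b. \<bar>A' n $a$b\<bar> \<le> Bd'"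
        "\<forall>n. A' n $j$k = 0" "\<forall>n a b. A' n $a$b \<noteq> A n $a$b \<longrightarrow> (b = k \<and> a \<le> j) \<or> (a = j \<and> k \<le> b)"
        "has_ED A' \<longrightarrow> has_ED A"
      proof -
        have hu: "\<And>n. upper_triangular (A n)" and hd: "\<And>n i. A n $i$i = q i n"
          and hb: "\<And>n a b. \<bar>A n $a$b\<bar> \<le> Bd" using h by blast+
        show ?thesis using shear[OF hu hd nz hb Bq hyp jk ty] that by blast
      qed
      have "\<forall>n a b. a < b \<and> decayZ (q a) \<noteq> decayZ (q b) \<and> rk a b < ?NN - s \<longrightarrow> A' n $a$b = 0"
      proof (intro allI impI)
        fix n a b assume ab: "a < b \<and> decayZ (q a) \<noteq> decayZ (q b) \<and> rk a b < ?NN - s"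
        show "A' n $a$b = 0"
        proof (cases "a = j \<and> b = k")
          case True then show ?thesis using A'(4) by simp
        next
          case ne: False
          have rne: "rk a b \<noteq> rk j k" using rk_inj ne by blast
          show ?thesis
          proof (cases "A' n $a$b = A n $a$b")
            case True
            have "rk a b < ?NN - Suc s" using rne r ab sN by linarith
            then show ?thesis using True h ab by auto
          next
            case False
            then have "(b = k \<and> a \<le> j) \<or> (a = j \<and> k \<le> b)" using A'(5) by blast
            then have "rk j k < rk a b"
            proof
              assume "b = k \<and> a \<le> j" then have "a < j" "b = k" using ne by auto
              then show ?thesis using rk_col by simp
            next
              assume "a = j \<and> k \<le> b" then have "a = j" "k < b" using ne by auto
              then show ?thesis using rk_row by simp
            qed
            then have False using r ab sN by linarith
            then show ?thesis ..
          qed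
        qed
      qed
      then have "has_ED A'" using Suc.IH A'(1-3) by blast
      then show ?thesis using A'(6) by blast
    qed
  qed
qed

lemma scaleR_mat: "c *\<^sub>R (mat a :: real^'n^'n) = mat (c * a)"
  by (simp add: vec_eq_iff mat_def)

theorem proposition3p3:
  fixes p :: "'d::{finite,linorder} \<Rightarrow> int \<Rightarrow> real"
    and C :: "int \<Rightarrow> (real, 'd::{finite,linorder}) vec^('d::{finite,linorder})"
  assumes "\<And>i. lyapunov_seq (p i)"
    and "\<And>i n. p i n = p i (- n)"
    and "bounded (range C)"
    and "\<And>n. upper_triangular (C n)"
    and "\<And>n i. C n $ i $ i = p i n"
  shows "ED_spectrum C = (\<Union>i. ED_spectrum (scalar_sys (p i)))"
proof -
  note lyap = assms(1) and sym = assms(2) and bdC = assms(3) and utC = assms(4) and diagC = assms(5)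
  have pnz: "p i n \<noteq> 0" for i n using lyap[of i] unfolding lyapunov_seq_def by blast
  have "\<forall>i. \<exists>b. \<forall>n. 1 / \<bar>p i n\<bar> \<le> b"
  proof
    fix i
    have "bdd_above (range (\<lambda>n. 1 / \<bar>p i n\<bar>))" using lyap[of i, unfolded lyapunov_seq_def] by (elim conjE)
    then show "\<exists>b. \<forall>n. 1 / \<bar>p i n\<bar> \<le> b" unfolding bdd_above_def by auto
  qed
  then obtain bf where bf: "\<And>i n. 1 / \<bar>p i n\<bar> \<le> bf i" by metis
  define Bp where "Bp = (\<Sum>i\<in>UNIV. \<bar>bf i\<bar>)"
  have Bp: "1 / \<bar>p i n\<bar> \<le> Bp" for i n
  proof -
    have "bf i \<le> \<bar>bf i\<bar>" by simp
    also have "\<bar>bf i\<bar> \<le> Bp" unfolding Bp_def by (rule member_le_sum) auto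
    finally show ?thesis using bf[of i n] by linarith
  qed
  obtain BC where BC: "\<And>n. norm (C n) \<le> BC" using bdC unfolding bounded_iff by auto
  have key: "has_ED (\<lambda>n. exp (- \<gamma>) *\<^sub>R C n) \<longleftrightarrow> (\<forall>i. has_ED (\<lambda>n. exp (- \<gamma>) *\<^sub>R scalar_sys (p i) n))" for \<gamma>
  proof -
    define q where "q i n = exp (- \<gamma>) * p i n" for i n
    define A where "A n = exp (- \<gamma>) *\<^sub>R C n" for n
    have qnz: "q i n \<noteq> 0" for i n unfolding q_def using pnz by simp
    have scal: "has_ED (\<lambda>n. exp (- \<gamma>) *\<^sub>R scalar_sys (p i) n) \<longleftrightarrow> decayZ (q i) \<or> growZ (q i)" for i
    proof -
      have "(\<lambda>n. exp (- \<gamma>) *\<^sub>R scalar_sys (p i) n) = (\<lambda>n. mat (q i n))"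
        unfolding scalar_sys_def q_def by (simp add: scaleR_mat)
      then show ?thesis using scalar_ED_iff[of "q i"] qnz by simp
    qed
    have utA: "upper_triangular (A n)" for n using utC[of n] unfolding upper_triangular_def A_def by simp
    have dA: "A n $i$i = q i n" for n i unfolding A_def q_def using diagC by simp
    have bA: "\<bar>A n $a$b\<bar> \<le> exp (- \<gamma>) * BC" for n a b
    proof -
      have "\<bar>A n $a$b\<bar> = exp (- \<gamma>) * \<bar>C n $a$b\<bar>" unfolding A_def by (simp add: abs_mult)
      also have "\<dots> \<le> exp (- \<gamma>) * BC" using entry_le_norm[of "C n" a b] BC[of n] by simp
      finally show ?thesis .
    qed
    have bq: "\<bar>1 / q i n\<bar> \<le> exp \<gamma> * Bp" for i n
    proof -
      have "\<bar>1 / q i n\<bar> = exp \<gamma> * (1 / \<bar>p i n\<bar>)" unfolding q_def by (simp add: abs_mult exp_minus field_simps)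
      also have "\<dots> \<le> exp \<gamma> * Bp" using Bp[of i n] by (intro mult_left_mono) auto
      finally show ?thesis .
    qed
    have sq: "q i (- l) = q i l" for i l unfolding q_def using sym by simp
    show ?thesis
    proof
      assume "has_ED (\<lambda>n. exp (- \<gamma>) *\<^sub>R C n)"
      then have ed: "has_ED A" unfolding A_def .
      show "\<forall>i. has_ED (\<lambda>n. exp (- \<gamma>) *\<^sub>R scalar_sys (p i) n)"
        using half_to_Z[OF utA dA qnz sq ed] scal by blast
    next
      assume "\<forall>i. has_ED (\<lambda>n. exp (- \<gamma>) *\<^sub>R scalar_sys (p i) n)"
      then have hyp: "\<And>i. decayZ (q i) \<or> growZ (q i)" using scal by blast
      have H: "(\<forall>n. upper_triangular (A n)) \<and> (\<forall>n i. A n $i$i = q i n)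
          \<and> (\<forall>n a b. \<bar>A n $a$b\<bar> \<le> exp (- \<gamma>) * BC)
          \<and> (\<forall>n a b. a < b \<and> decayZ (q a) \<noteq> decayZ (q b) \<and> rk a b < CARD('d) * CARD('d) - CARD('d) * CARD('d) \<longrightarrow> A n $a$b = 0)"
        using utA dA bA by simp
      have "has_ED A"
        by (rule dir_I[where q = q and s = "CARD('d) * CARD('d)", OF qnz bq hyp, rule_format, OF H])
      then show "has_ED (\<lambda>n. exp (- \<gamma>) *\<^sub>R C n)" unfolding A_def .
    qed
  qed
  show ?thesis unfolding ED_spectrum_def using key by blast
qed

end
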